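(* Under Assumptions A1–A4, with $F$ linear in $\boldsymbol\lambda$, for every $\boldsymbol\lambda\in\Lambda$, $$\frac1T\sum_{s=0}^{S-1}\sum_{t=s\tau+1}^{(s+1)\tau}\mathbb E\big[F(\boldsymbol w^{(t)},\boldsymbol\lambda)-F(\boldsymbol w^{(t)},\boldsymbol\lambda^{(s)})\big]\le\frac{D_\Lambda^2}{2\gamma T}+\frac{\gamma\tau G_\lambda^2}{2}+\frac{\gamma\tau\sigma_\lambda^2}{2m}.$$
   Context: Setting: $N$ clients, $\mathcal N=\{1,\dots,N\}$. Client $i$ has loss $\ell_i(\boldsymbol w;\zeta)$ and local objective $f_i(\boldsymbol w)=\mathbb E_{\zeta\sim\mathcal P_i}[\ell_i(\boldsymbol w;\zeta)]$, with $\boldsymbol w$ in a closed convex set $\mathcal W\subset\mathbb R^p$. $\Lambda=\{\boldsymbol\lambda\in\mathbb R^N_+:\sum_i\lambda_i=1\}$, $F(\boldsymbol w,\boldsymbol\lambda)=\sum_{i=1}^N\lambda_i f_i(\boldsymbol w)$. DRDM runs $S=T/\tau$ rounds; $\boldsymbol w^{(t)}$ is its virtual global primal iterate at local iteration $t$ and $\boldsymbol\lambda^{(s)}$ its dual iterate in round $s$. Dual update: in round $s$ the server samples $t'$ uniformly from $\{s\tau+1,\dots,(s+1)\tau\}$, samples uniformly a set $\mathcal U$ of $m$ clients, forms $\boldsymbol v\in\mathbb R^N$ with $v_i=\frac Nm\ell_i(\boldsymbol w^{(t')};\zeta_i)$ for $i\in\mathcal U$ and $0$ otherwise, and sets $\boldsymbol\lambda^{(s+1)}=\Pi_\Lambda(\boldsymbol\lambda^{(s)}+\tau\gamma\boldsymbol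 v)$. Assumptions: (A1) $L$-smoothness of $f_i$, $F$; (A2) $\mathbb E\|\nabla f_i(\boldsymbol w)\|\le G_w$, $\mathbb E\|\nabla_{\boldsymbol\lambda}F(\boldsymbol w,\boldsymbol\lambda)\|\le G_\lambda$; (A3) diameters of $\mathcal W,\Lambda$ at most $D_{\mathcal W},D_\Lambda$; (A4) $\mathbb E\|\tilde\nabla F(\boldsymbol w;\boldsymbol\lambda)-\nabla_{\boldsymbol\lambda}F(\boldsymbol w;\boldsymbol\lambda)\|^2\le\sigma_\lambda^2$, where $\tilde\nabla F$ is the $N$-vector with $i$th entry $\ell_i(\boldsymbol w;\xi)$ and zeros elsewhere, and the analogous bound $\sigma_w^2$ for primal stochastic gradients. *)

theory Defs
  imports "HOL-Analysis.Analysis" "HOL-Probability.Probability"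
begin

text \<open>Clients are indexed by a finite type 'n, so N = CARD('n); dual vectors live in real^'n.\<close>

definition Lambda_set :: "(real^'n::finite) set" where
  "Lambda_set = {l. (\<forall>i. 0 \<le> l$i) \<and> (\<Sum>i\<in>UNIV. l$i) = 1}"

definition Fobj :: "('n::finite \<Rightarrow> 'w \<Rightarrow> real) \<Rightarrow> 'w \<Rightarrow> real^'n \<Rightarrow> real" where
  "Fobj f x l = (\<Sum>i\<in>UNIV. l$i * f i x)"

definition gradF_lam :: "('n::finite \<Rightarrow> 'w \<Rightarrow> real) \<Rightarrow> 'w \<Rightarrow> real^'n" where
  "gradF_lam f x = (\<chi> i. f i x)"

definition gradF_joint :: "('n::finite \<Rightarrow> 'w::real_normed_vector \<Rightarrow> real) \<Rightarrow> ('n \<Rightarrow> 'w \<Rightarrow> 'w)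
    \<Rightarrow> 'w \<Rightarrow> real^'n \<Rightarrow> 'w \<times> (real^'n)" where
  "gradF_joint f gf x l = ((\<Sum>i\<in>UNIV. l$i *\<^sub>R gf i x), gradF_lam f x)"

text \<open>single-client stochastic lambda-gradient (client i sampled uniformly, xi ~ P_i),
  scaled by N so that it is unbiased.\<close>
definition tildeGradF :: "('n::finite \<Rightarrow> 'w \<Rightarrow> 'z \<Rightarrow> real) \<Rightarrow> 'n \<Rightarrow> 'w \<Rightarrow> 'z \<Rightarrow> real^'n" where
  "tildeGradF loss i x \<xi> = (\<chi> j. if j = i then real CARD('n) * loss i x \<xi> else 0)"

definition dual_vec :: "nat \<Rightarrow> ('n::finite \<Rightarrow> 'w \<Rightarrow> 'z \<Rightarrow> real) \<Rightarrow> 'n set \<Rightarrow> 'w \<Rightarrow> ('n \<Rightarrow> 'z) \<Rightarrow> real^'n" where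
  "dual_vec m loss U x \<zeta> = (\<chi> i. if i \<in> U then (real CARD('n) / real m) * loss i x (\<zeta> i) else 0)"

definition rv_events :: "'a measure \<Rightarrow> 'b measure \<Rightarrow> ('a \<Rightarrow> 'b) \<Rightarrow> 'a set set" where
  "rv_events M N X = {X -` A \<inter> space M | A. A \<in> sets N}"

text \<open>law of the server's fresh samples in round s: t' uniform on the round's iterations,
  U uniform among m-subsets of clients, zeta_i ~ P_i, all independent.\<close>
definition sample_law :: "('n::finite \<Rightarrow> 'z measure) \<Rightarrow> nat \<Rightarrow> nat \<Rightarrow> nat
    \<Rightarrow> (nat \<times> 'n set \<times> ('n \<Rightarrow> 'z)) measure" where
  "sample_law P \<tau> m s =
     measure_pmf (pmf_of_set {s*\<tau>+1..(s+1)*\<tau>}) \<Otimes>\<^sub>M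
       (measure_pmf (pmf_of_set {A. card A = m}) \<Otimes>\<^sub>M PiM UNIV P)"

definition dual_sample :: "(nat \<Rightarrow> 'a \<Rightarrow> nat) \<Rightarrow> (nat \<Rightarrow> 'a \<Rightarrow> 'n set) \<Rightarrow> (nat \<Rightarrow> 'n \<Rightarrow> 'a \<Rightarrow> 'z)
    \<Rightarrow> nat \<Rightarrow> 'a \<Rightarrow> nat \<times> 'n set \<times> ('n \<Rightarrow> 'z)" where
  "dual_sample tp U \<zeta> s \<omega> = (tp s \<omega>, U s \<omega>, (\<lambda>i. \<zeta> s i \<omega>))"

text \<open>events of the history before the dual sampling of round s: primal iterates
  up to iteration (s+1)tau, dual iterates up to round s, dual samples of earlier rounds.\<close>
definition history_events :: "'a measure \<Rightarrow> ('n::finite \<Rightarrow> 'z measure) \<Rightarrow> nat \<Rightarrow> nat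
    \<Rightarrow> (nat \<Rightarrow> 'a \<Rightarrow> 'w::topological_space) \<Rightarrow> (nat \<Rightarrow> 'a \<Rightarrow> real^'n)
    \<Rightarrow> (nat \<Rightarrow> 'a \<Rightarrow> nat) \<Rightarrow> (nat \<Rightarrow> 'a \<Rightarrow> 'n set) \<Rightarrow> (nat \<Rightarrow> 'n \<Rightarrow> 'a \<Rightarrow> 'z)
    \<Rightarrow> nat \<Rightarrow> 'a set set" where
  "history_events M P \<tau> m w lam tp U \<zeta> s =
     (\<Union>t\<in>{..(s+1)*\<tau>}. rv_events M borel (w t))
     \<union> (\<Union>r\<in>{..s}. rv_events M borel (lam r))
     \<union> (\<Union>r\<in>{..<s}. rv_events M (sample_law P \<tau> m r) (dual_sample tp U \<zeta> r))"

end

theory Submission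
  imports Defs
begin


lemma indep_fubini:
  fixes g :: "'x \<times> 'y \<Rightarrow> real" and MX :: "'x measure" and MY :: "'y measure"
  assumes MP: "prob_space M" and X: "X \<in> measurable M MX" and Y: "Y \<in> measurable M MY"
  and law: "distr M MY Y = MY"
  and ind: "\<And>A B. A \<in> sets MX \<Longrightarrow> B \<in> sets MY \<Longrightarrow>
     measure M ((X -` A \<inter> space M) \<inter> (Y -` B \<inter> space M)) = measure M (X -` A \<inter> space M) * measure M (Y -` B \<inter> space M)"
  and g: "g \<in> borel_measurable (MX \<Otimes>\<^sub>M MY)"
  and bnd: "\<And>x. x \<in> space MX \<Longrightarrow> (\<integral>\<^sup>+y. ennreal \<bar>g(x,y)\<bar> \<partial>MY) \<le> ennreal B"
  shows "integrable M (\<lambda>\<omega>. g (X \<omega>, Y \<omega>))"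
    and "(\<integral>\<omega>. g (X \<omega>, Y \<omega>) \<partial>M) = (\<integral>x. (\<integral>y. g(x,y) \<partial>MY) \<partial>distr M MX X)"
proof -
  interpret prob_space M by fact
  have XY: "(\<lambda>\<omega>. (X \<omega>, Y \<omega>)) \<in> measurable M (MX \<Otimes>\<^sub>M MY)" using X Y by measurable
  interpret PX: prob_space "distr M MX X" by (rule prob_space_distr[OF X])
  interpret PY: prob_space MY by (metis law prob_space_distr[OF Y])
  interpret PP: pair_prob_space "distr M MX X" MY ..
  have eq: "distr M MX X \<Otimes>\<^sub>M MY = distr M (MX \<Otimes>\<^sub>M MY) (\<lambda>\<omega>. (X \<omega>, Y \<omega>))"
  proof (rule pair_measure_eqI)
    show "sigma_finite_measure (distr M MX X)" ..
    show "sigma_finite_measure MY" ..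
    fix A B assume A: "A \<in> sets (distr M MX X)" and B: "B \<in> sets MY"
    have "emeasure (distr M (MX \<Otimes>\<^sub>M MY) (\<lambda>\<omega>. (X \<omega>, Y \<omega>))) (A \<times> B)
        = emeasure M ((\<lambda>x. (X x, Y x)) -` (A \<times> B) \<inter> space M)"
      using A B by (intro emeasure_distr[OF XY]) auto
    also have "(\<lambda>x. (X x, Y x)) -` (A \<times> B) \<inter> space M = (X -` A \<inter> space M) \<inter> (Y -` B \<inter> space M)"
      by auto
    also have "emeasure M \<dots> = emeasure M (X -` A \<inter> space M) * emeasure M (Y -` B \<inter> space M)"
      using ind[of A B] A B X Y
      by (simp add: emeasure_eq_measure measure_nonneg ennreal_mult measurable_sets)
    also have "\<dots> = emeasure (distr M MX X) A * emeasure MY B"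
      using A B X Y law by (metis emeasure_distr sets_distr)
    finally show "emeasure (distr M MX X) A * emeasure MY B = emeasure (distr M (MX \<Otimes>\<^sub>M MY) (\<lambda>\<omega>. (X \<omega>, Y \<omega>))) (A \<times> B)" by simp
  qed simp
  have sets_eq: "sets (distr M MX X \<Otimes>\<^sub>M MY) = sets (MX \<Otimes>\<^sub>M MY)"
    by (intro sets_pair_measure_cong) auto
  have gm: "g \<in> borel_measurable (distr M MX X \<Otimes>\<^sub>M MY)"
    using g measurable_cong_sets[OF sets_eq refl] by blast
  have "(\<integral>\<^sup>+z. ennreal (norm (g z)) \<partial>(distr M MX X \<Otimes>\<^sub>M MY))
      = (\<integral>\<^sup>+x. (\<integral>\<^sup>+y. ennreal (norm (g (x,y))) \<partial>MY) \<partial>distr M MX X)"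
    by (rule PY.nn_integral_fst[symmetric]) (use gm in measurable)
  also have "\<dots> \<le> (\<integral>\<^sup>+x. ennreal B \<partial>distr M MX X)"
    by (intro nn_integral_mono) (use bnd in auto)
  also have "\<dots> < \<infinity>" using PX.emeasure_space_1 by (simp add: ennreal_mult_less_top)
  finally have int: "integrable (distr M MX X \<Otimes>\<^sub>M MY) g"
    using gm by (simp add: integrable_iff_bounded)
  show "integrable M (\<lambda>\<omega>. g (X \<omega>, Y \<omega>))"
    using int unfolding eq by (subst (asm) integrable_distr_eq[OF XY g]) 
  have "(\<integral>\<omega>. g (X \<omega>, Y \<omega>) \<partial>M) = integral\<^sup>L (distr M (MX \<Otimes>\<^sub>M MY) (\<lambda>\<omega>. (X \<omega>, Y \<omega>))) g"
    by (rule integral_distr[OF XY g, symmetric])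
  also have "\<dots> = integral\<^sup>L (distr M MX X \<Otimes>\<^sub>M MY) g" by (simp add: eq)
  also have "\<dots> = (\<integral>x. (\<integral>y. g(x,y) \<partial>MY) \<partial>distr M MX X)"
    by (rule PP.integral_fst'[OF int, symmetric])
  finally show "(\<integral>\<omega>. g (X \<omega>, Y \<omega>) \<partial>M) = (\<integral>x. (\<integral>y. g(x,y) \<partial>MY) \<partial>distr M MX X)" .
qed



lemma card_subsets_with:
  fixes i :: "'n::finite"
  assumes m: "1 \<le> m"
  shows "card {A::'n set. card A = m \<and> i \<in> A} * CARD('n) = m * card {A::'n set. card A = m}"
proof -
  have c1: "card {A::'n set. card A = m} = CARD('n) choose m"
    using n_subsets[of "UNIV::'n set" m] by simp
  have bij: "bij_betw (insert i) {B. B \<subseteq> UNIV - {i} \<and> card B = m - 1} {A::'n set. card A = m \<and> i \<in> A}"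
  proof (rule bij_betw_imageI)
    show "inj_on (insert i) {B. B \<subseteq> UNIV - {i} \<and> card B = m - 1}"
      by (rule inj_onI) blast
    show "insert i ` {B. B \<subseteq> UNIV - {i} \<and> card B = m - 1} = {A::'n set. card A = m \<and> i \<in> A}"
    proof safe
      fix B :: "'n set" assume "B \<subseteq> UNIV - {i}" "card B = m - 1"
      then show "card (insert i B) = m" using m
        by (subst card_insert_disjoint) auto
    next
      fix A :: "'n set" assume "i \<in> A" "m = card A"
      then show "A \<in> insert i ` {B. B \<subseteq> UNIV - {i} \<and> card B = card A - 1}"
        by (intro image_eqI[of _ _ "A - {i}"]) auto
    qed
  qed
  have c2: "card {A::'n set. card A = m \<and> i \<in> A} = (CARD('n) - 1) choose (m - 1)"
    using bij_betw_same_card[OF bij] n_subsets[of "UNIV - {i}" "m - 1"] by simp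
  have "m * (CARD('n) choose m) = CARD('n) * ((CARD('n) - 1) choose (m - 1))"
    using binomial_absorption[of "m - 1" "CARD('n)"] m by simp
  then show ?thesis using c1 c2 by (simp add: mult.commute)
qed



lemma measurable_pmf_pair:
  fixes g :: "'a::countable \<times> 'b \<Rightarrow> 'c"
  assumes "\<And>a. (\<lambda>y. g (a, y)) \<in> measurable N K"
  shows "g \<in> measurable (measure_pmf p \<Otimes>\<^sub>M N) K"
proof -
  have "sets (measure_pmf p \<Otimes>\<^sub>M N) = sets (count_space UNIV \<Otimes>\<^sub>M N)"
    by (intro sets_pair_measure_cong) auto
  moreover have "g \<in> measurable (count_space UNIV \<Otimes>\<^sub>M N) K"
    by (rule measurable_pair_measure_countable1) (use assms in auto)
  ultimately show ?thesis using measurable_cong_sets by blast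
qed

lemma pmf_pair_nn:
  fixes h :: "'a \<times> 'b \<Rightarrow> ennreal"
  assumes N: "prob_space N" and fin: "finite (set_pmf p)"
    and h: "h \<in> borel_measurable (measure_pmf p \<Otimes>\<^sub>M N)"
  shows "(\<integral>\<^sup>+z. h z \<partial>(measure_pmf p \<Otimes>\<^sub>M N)) = (\<Sum>a\<in>set_pmf p. ennreal (pmf p a) * (\<integral>\<^sup>+y. h (a,y) \<partial>N))"
proof -
  interpret N: prob_space N by fact
  have "(\<integral>\<^sup>+z. h z \<partial>(measure_pmf p \<Otimes>\<^sub>M N)) = (\<integral>\<^sup>+x. (\<integral>\<^sup>+y. h (x,y) \<partial>N) \<partial>measure_pmf p)"
    by (rule N.nn_integral_fst[symmetric]) (fact h)
  also have "\<dots> = (\<Sum>a\<in>set_pmf p. (\<integral>\<^sup>+y. h (a,y) \<partial>N) * ennreal (pmf p a))"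
    by (rule nn_integral_measure_pmf_finite[OF fin]) auto
  finally show ?thesis by (simp add: mult.commute)
qed

lemma pmf_pair_int:
  fixes g :: "'a \<times> 'b \<Rightarrow> real"
  assumes N: "prob_space N" and fin: "finite (set_pmf p)"
    and g: "g \<in> borel_measurable (measure_pmf p \<Otimes>\<^sub>M N)"
    and int: "\<And>a. a \<in> set_pmf p \<Longrightarrow> integrable N (\<lambda>y. g (a,y))"
  shows "integrable (measure_pmf p \<Otimes>\<^sub>M N) g"
    and "(\<integral>z. g z \<partial>(measure_pmf p \<Otimes>\<^sub>M N)) = (\<Sum>a\<in>set_pmf p. pmf p a * (\<integral>y. g (a,y) \<partial>N))"
proof -
  interpret N: prob_space N by fact
  interpret PP: pair_sigma_finite "measure_pmf p" N ..
  have "(\<integral>\<^sup>+z. ennreal (norm (g z)) \<partial>(measure_pmf p \<Otimes>\<^sub>M N))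
     = (\<Sum>a\<in>set_pmf p. ennreal (pmf p a) * (\<integral>\<^sup>+y. ennreal (norm (g (a,y))) \<partial>N))"
    by (rule pmf_pair_nn[OF N fin]) (use g in measurable)
  also have "\<dots> < \<infinity>"
    using int by (auto simp: ennreal_sum_less_top ennreal_mult_less_top fin integrable_iff_bounded)
  finally show gi: "integrable (measure_pmf p \<Otimes>\<^sub>M N) g"
    using g by (simp add: integrable_iff_bounded)
  have "(\<integral>z. g z \<partial>(measure_pmf p \<Otimes>\<^sub>M N)) = (\<integral>x. (\<integral>y. g (x,y) \<partial>N) \<partial>measure_pmf p)"
    by (rule PP.integral_fst'[OF gi, symmetric])
  also have "\<dots> = (\<Sum>a\<in>set_pmf p. (\<integral>y. g (a,y) \<partial>N) * pmf p a)"
    by (rule integral_measure_pmf_real[OF fin]) auto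
  finally show "(\<integral>z. g z \<partial>(measure_pmf p \<Otimes>\<^sub>M N)) = (\<Sum>a\<in>set_pmf p. pmf p a * (\<integral>y. g (a,y) \<partial>N))"
    by (simp add: mult.commute)
qed



lemma norm_sq_vec: "(norm (v :: real^'n))\<^sup>2 = (\<Sum>j\<in>UNIV. (v$j)\<^sup>2)"
  unfolding power2_norm_eq_inner inner_vec_def by (simp add: power2_eq_square)

lemma tilde_sq:
  fixes loss :: "'n::finite \<Rightarrow> 'w \<Rightarrow> 'z \<Rightarrow> real"
  shows "(norm (tildeGradF loss i x \<xi> - gradF_lam f x))\<^sup>2
     = (real CARD('n))\<^sup>2 * (loss i x \<xi>)\<^sup>2 - 2 * real CARD('n) * f i x * loss i x \<xi> + (norm (gradF_lam f x))\<^sup>2"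
proof -
  let ?N = "real CARD('n)"
  have "(norm (tildeGradF loss i x \<xi> - gradF_lam f x))\<^sup>2
      = (\<Sum>j\<in>UNIV. ((if j = i then ?N * loss i x \<xi> else 0) - f j x)\<^sup>2)"
    by (simp add: norm_sq_vec tildeGradF_def gradF_lam_def)
  also have "\<dots> = (\<Sum>j\<in>UNIV. (f j x)\<^sup>2 + (if j = i then ?N\<^sup>2 * (loss i x \<xi>)\<^sup>2 - 2 * ?N * f i x * loss i x \<xi> else 0))"
    by (intro sum.cong) (auto simp: power2_eq_square algebra_simps)
  also have "\<dots> = (\<Sum>j\<in>UNIV. (f j x)\<^sup>2) + (?N\<^sup>2 * (loss i x \<xi>)\<^sup>2 - 2 * ?N * f i x * loss i x \<xi>)"
    by (simp add: sum.distrib)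
  also have "(\<Sum>j\<in>UNIV. (f j x)\<^sup>2) = (norm (gradF_lam f x))\<^sup>2"
    by (simp add: norm_sq_vec gradF_lam_def)
  finally show ?thesis by simp
qed

lemma loss_facts:
  fixes loss :: "'n::finite \<Rightarrow> 'w \<Rightarrow> 'z \<Rightarrow> real"
  assumes P: "\<And>i. prob_space (P i)"
    and lm: "\<And>i. (\<lambda>\<xi>. loss i x \<xi>) \<in> borel_measurable (P i)"
    and fd: "\<And>i. f i x = (\<integral>\<xi>. loss i x \<xi> \<partial>P i)"
    and A4: "(\<Sum>i\<in>UNIV. \<integral>\<^sup>+\<xi>. ennreal ((norm (tildeGradF loss i x \<xi> - gradF_lam f x))\<^sup>2) \<partial>P i)
          \<le> ennreal (real CARD('n) * sg\<^sup>2)"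
  shows "\<And>i. integrable (P i) (\<lambda>\<xi>. (loss i x \<xi>)\<^sup>2)"
    and "\<And>i. integrable (P i) (\<lambda>\<xi>. loss i x \<xi>)"
    and "real CARD('n) * (\<Sum>i\<in>UNIV. \<integral>\<xi>. (loss i x \<xi>)\<^sup>2 \<partial>P i) \<le> sg\<^sup>2 + (norm (gradF_lam f x))\<^sup>2"
proof -
  let ?N = "real CARD('n)"
  let ?G = "(norm (gradF_lam f x))\<^sup>2"
  define Q where "Q i \<xi> = (norm (tildeGradF loss i x \<xi> - gradF_lam f x))\<^sup>2" for i \<xi>
  have Qeq: "Q i \<xi> = ?N\<^sup>2 * (loss i x \<xi>)\<^sup>2 - 2 * ?N * f i x * loss i x \<xi> + ?G" for i \<xi>
    unfolding Q_def by (rule tilde_sq)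
  have Qm: "Q i \<in> borel_measurable (P i)" for i
    unfolding Qeq[abs_def] using lm[of i] by measurable
  have Qfin: "(\<integral>\<^sup>+\<xi>. ennreal (Q i \<xi>) \<partial>P i) < \<infinity>" for i
  proof -
    have "(\<integral>\<^sup>+\<xi>. ennreal (Q i \<xi>) \<partial>P i) \<le> (\<Sum>i\<in>UNIV. \<integral>\<^sup>+\<xi>. ennreal (Q i \<xi>) \<partial>P i)"
      by (rule member_le_sum) auto
    also have "\<dots> \<le> ennreal (?N * sg\<^sup>2)" using A4 unfolding Q_def .
    finally show ?thesis using order.strict_trans1 by fastforce
  qed
  have Qint: "integrable (P i) (Q i)" for i
    using Qfin[of i] Qm[of i] by (simp add: integrable_iff_bounded Q_def)
  have Npos: "?N > 0" by simp
  show L2: "integrable (P i) (\<lambda>\<xi>. (loss i x \<xi>)\<^sup>2)" for i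
  proof -
    interpret prob_space "P i" by (rule P)
    have I: "integrable (P i) (\<lambda>\<xi>. (2 / ?N\<^sup>2) * (Q i \<xi> + 2 * (f i x)\<^sup>2))"
      using Qint[of i] by auto
    have B: "norm ((loss i x \<xi>)\<^sup>2) \<le> norm ((2 / ?N\<^sup>2) * (Q i \<xi> + 2 * (f i x)\<^sup>2))" for \<xi>
    proof -
      have a: "0 \<le> (?N * loss i x \<xi> - 2 * f i x)\<^sup>2" by simp
      have "?N\<^sup>2 * (loss i x \<xi>)\<^sup>2 \<le> 2 * (Q i \<xi> + 2 * (f i x)\<^sup>2)"
        using a unfolding Qeq by (simp add: power2_eq_square algebra_simps)
          (smt (verit) mult_nonneg_nonneg norm_ge_zero)
      then have "(loss i x \<xi>)\<^sup>2 \<le> (2 / ?N\<^sup>2) * (Q i \<xi> + 2 * (f i x)\<^sup>2)"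
        using Npos by (simp add: field_simps)
      moreover have "0 \<le> Q i \<xi>" by (simp add: Q_def)
      ultimately show ?thesis by simp
    qed
    have m: "(\<lambda>\<xi>. (loss i x \<xi>)\<^sup>2) \<in> borel_measurable (P i)" using lm[of i] by measurable
    show ?thesis
      by (rule Bochner_Integration.integrable_bound[OF I m]) (intro AE_I2 B)
  qed
  show L1: "integrable (P i) (\<lambda>\<xi>. loss i x \<xi>)" for i
  proof -
    interpret prob_space "P i" by (rule P)
    have I: "integrable (P i) (\<lambda>\<xi>. 1 + (loss i x \<xi>)\<^sup>2)" using L2[of i] by auto
    have B: "norm (loss i x \<xi>) \<le> norm (1 + (loss i x \<xi>)\<^sup>2)" for \<xi>
    proof -
      have "0 \<le> (\<bar>loss i x \<xi>\<bar> - 1)\<^sup>2" by simp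
      then have "\<bar>loss i x \<xi>\<bar> \<le> 1 + (loss i x \<xi>)\<^sup>2"
        by (simp add: power2_eq_square algebra_simps abs_mult_self_eq)
      then show ?thesis by simp
    qed
    show ?thesis
      by (rule Bochner_Integration.integrable_bound[OF I lm[of i]]) (intro AE_I2 B)
  qed
  have intQ: "(\<integral>\<xi>. Q i \<xi> \<partial>P i) = ?N\<^sup>2 * (\<integral>\<xi>. (loss i x \<xi>)\<^sup>2 \<partial>P i) - 2 * ?N * (f i x)\<^sup>2 + ?G" for i
  proof -
    interpret prob_space "P i" by (rule P)
    have "(\<integral>\<xi>. Q i \<xi> \<partial>P i) = (\<integral>\<xi>. ?N\<^sup>2 * (loss i x \<xi>)\<^sup>2 - 2 * ?N * f i x * loss i x \<xi> + ?G \<partial>P i)"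
      by (simp add: Qeq)
    also have "\<dots> = ?N\<^sup>2 * (\<integral>\<xi>. (loss i x \<xi>)\<^sup>2 \<partial>P i) - 2 * ?N * f i x * (\<integral>\<xi>. loss i x \<xi> \<partial>P i) + ?G"
      using L1[of i] L2[of i] by (simp add: prob_space)
    finally show ?thesis by (simp add: fd[of i, symmetric] power2_eq_square)
  qed
  have "(\<Sum>i\<in>UNIV. ennreal (\<integral>\<xi>. Q i \<xi> \<partial>P i)) = (\<Sum>i\<in>UNIV. \<integral>\<^sup>+\<xi>. ennreal (Q i \<xi>) \<partial>P i)"
    by (intro sum.cong refl nn_integral_eq_integral[symmetric] Qint) (simp add: Q_def)
  also have "\<dots> \<le> ennreal (?N * sg\<^sup>2)" using A4 unfolding Q_def .
  finally have le1: "(\<Sum>i\<in>UNIV. ennreal (\<integral>\<xi>. Q i \<xi> \<partial>P i)) \<le> ennreal (?N * sg\<^sup>2)" .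
  have nn: "0 \<le> (\<integral>\<xi>. Q i \<xi> \<partial>P i)" for i
    unfolding Q_def by (rule Bochner_Integration.integral_nonneg) simp
  have "(\<Sum>i\<in>UNIV. ennreal (\<integral>\<xi>. Q i \<xi> \<partial>P i)) = ennreal (\<Sum>i\<in>UNIV. \<integral>\<xi>. Q i \<xi> \<partial>P i)"
    by (rule sum_ennreal) (use nn in auto)
  with le1 have "(\<Sum>i\<in>UNIV. \<integral>\<xi>. Q i \<xi> \<partial>P i) \<le> ?N * sg\<^sup>2"
    by (simp add: ennreal_le_iff)
  also have "(\<Sum>i\<in>UNIV. \<integral>\<xi>. Q i \<xi> \<partial>P i) = (\<Sum>i\<in>UNIV. ?N\<^sup>2 * (\<integral>\<xi>. (loss i x \<xi>)\<^sup>2 \<partial>P i) - 2 * ?N * (f i x)\<^sup>2 + ?G)"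
    by (simp only: intQ)
  also have "\<dots> = ?N\<^sup>2 * (\<Sum>i\<in>UNIV. \<integral>\<xi>. (loss i x \<xi>)\<^sup>2 \<partial>P i) - 2 * ?N * (\<Sum>i\<in>UNIV. (f i x)\<^sup>2) + ?N * ?G"
    by (simp only: sum.distrib sum_subtractf sum_distrib_left[symmetric] sum_constant)
  also have "(\<Sum>i\<in>UNIV. (f i x)\<^sup>2) = ?G" by (simp add: norm_sq_vec gradF_lam_def)
  finally have "?N * (?N * (\<Sum>i\<in>UNIV. \<integral>\<xi>. (loss i x \<xi>)\<^sup>2 \<partial>P i)) \<le> ?N * (sg\<^sup>2 + ?G)"
    by (simp add: power2_eq_square algebra_simps)
  then show "?N * (\<Sum>i\<in>UNIV. \<integral>\<xi>. (loss i x \<xi>)\<^sup>2 \<partial>P i) \<le> sg\<^sup>2 + ?G"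
    using Npos by (simp add: mult_le_cancel_left_pos)
qed



lemma PiM_comp_int:
  fixes P :: "'n \<Rightarrow> 'z measure" and h :: "'z \<Rightarrow> real"
  assumes P: "\<And>i. prob_space (P i)" and hi: "integrable (P i) h"
  shows "integrable (PiM UNIV P) (\<lambda>z. h (z i))" and "(\<integral>z. h (z i) \<partial>PiM UNIV P) = (\<integral>\<xi>. h \<xi> \<partial>P i)"
proof -
  have D: "distr (PiM UNIV P) (P i) (\<lambda>z. z i) = P i" by (rule distr_PiM_component) (auto intro: P)
  have cm: "(\<lambda>z. z i) \<in> measurable (PiM UNIV P) (P i)" by (rule measurable_component_singleton) simp
  have hm: "h \<in> borel_measurable (P i)" using hi by auto
  show "integrable (PiM UNIV P) (\<lambda>z. h (z i))"
  proof -
    have "integrable (distr (PiM UNIV P) (P i) (\<lambda>z. z i)) h" using hi by (simp only: D)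
    then show ?thesis using integrable_distr_eq[OF cm hm] by simp
  qed
  show "(\<integral>z. h (z i) \<partial>PiM UNIV P) = (\<integral>\<xi>. h \<xi> \<partial>P i)"
    using integral_distr[OF cm, of h] hm D by simp
qed

lemma card_round: "card {s*\<tau>+1..(s+1)*\<tau>} = (\<tau>::nat)"
  by simp

lemma SL_integral:
  fixes P :: "'n::finite \<Rightarrow> 'z measure" and g :: "nat \<times> 'n set \<times> ('n \<Rightarrow> 'z) \<Rightarrow> real"
  assumes P: "\<And>i. prob_space (P i)" and \<tau>: "1 \<le> \<tau>" and m: "1 \<le> m" "m \<le> CARD('n)"
   and g: "g \<in> borel_measurable (sample_law P \<tau> m s)"
   and gi: "\<And>t' A. t' \<in> {s*\<tau>+1..(s+1)*\<tau>} \<Longrightarrow> card A = m \<Longrightarrow> integrable (PiM UNIV P) (\<lambda>z. g (t', A, z))"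
  shows "integrable (sample_law P \<tau> m s) g"
   and "(\<integral>y. g y \<partial>sample_law P \<tau> m s) = (\<Sum>t'\<in>{s*\<tau>+1..(s+1)*\<tau>}. \<Sum>A\<in>{A. card A = m}. \<integral>z. g (t',A,z) \<partial>PiM UNIV P) / (real \<tau> * real (card {A::'n set. card A = m}))"
proof -
  let ?R = "{s*\<tau>+1..(s+1)*\<tau>}" and ?C = "{A::'n set. card A = m}"
  interpret PI: prob_space "PiM UNIV P" by (intro prob_space_PiM P)
  have Rne: "?R \<noteq> {}" using \<tau> by auto
  have Cfin: "finite ?C" by simp
  obtain A0 :: "'n set" where "card A0 = m" using obtain_subset_with_card_n[of m "UNIV::'n set"] m by auto
  then have Cne: "?C \<noteq> {}" by auto
  interpret P2: prob_space "measure_pmf (pmf_of_set ?C) \<Otimes>\<^sub>M PiM UNIV P"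
    by (intro prob_space_pair prob_space_measure_pmf PI.prob_space_axioms)
  have g2: "(\<lambda>r. g (t', r)) \<in> borel_measurable (measure_pmf (pmf_of_set ?C) \<Otimes>\<^sub>M PiM UNIV P)" for t'
    using g unfolding sample_law_def by measurable
  have int2: "integrable (measure_pmf (pmf_of_set ?C) \<Otimes>\<^sub>M PiM UNIV P) (\<lambda>r. g (t', r))"
    and eq2: "(\<integral>r. g (t', r) \<partial>(measure_pmf (pmf_of_set ?C) \<Otimes>\<^sub>M PiM UNIV P))
       = (\<Sum>A\<in>?C. pmf (pmf_of_set ?C) A * (\<integral>z. g (t', A, z) \<partial>PiM UNIV P))"
    if "t' \<in> ?R" for t'
  proof -
    have gg: "(\<lambda>y. g (t', y)) \<in> borel_measurable (measure_pmf (pmf_of_set ?C) \<Otimes>\<^sub>M PiM UNIV P)" by (rule g2)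
    show "integrable (measure_pmf (pmf_of_set ?C) \<Otimes>\<^sub>M PiM UNIV P) (\<lambda>r. g (t', r))"
      using pmf_pair_int(1)[OF PI.prob_space_axioms _ gg] Cfin Cne gi that by auto
    show "(\<integral>r. g (t', r) \<partial>(measure_pmf (pmf_of_set ?C) \<Otimes>\<^sub>M PiM UNIV P))
       = (\<Sum>A\<in>?C. pmf (pmf_of_set ?C) A * (\<integral>z. g (t', A, z) \<partial>PiM UNIV P))"
      using pmf_pair_int(2)[OF PI.prob_space_axioms _ gg] Cfin Cne gi that by auto
  qed
  have g1: "g \<in> borel_measurable (measure_pmf (pmf_of_set ?R) \<Otimes>\<^sub>M (measure_pmf (pmf_of_set ?C) \<Otimes>\<^sub>M PiM UNIV P))"
    using g unfolding sample_law_def .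
  show "integrable (sample_law P \<tau> m s) g"
    unfolding sample_law_def
    using pmf_pair_int(1)[OF P2.prob_space_axioms _ g1] Rne int2 by auto
  have "(\<integral>y. g y \<partial>sample_law P \<tau> m s) = (\<Sum>t'\<in>?R. pmf (pmf_of_set ?R) t' * (\<integral>r. g (t', r) \<partial>(measure_pmf (pmf_of_set ?C) \<Otimes>\<^sub>M PiM UNIV P)))"
    unfolding sample_law_def
    using pmf_pair_int(2)[OF P2.prob_space_axioms _ g1] Rne int2 by auto
  also have "\<dots> = (\<Sum>t'\<in>?R. (1 / real \<tau>) * (\<Sum>A\<in>?C. (1 / real (card ?C)) * (\<integral>z. g (t', A, z) \<partial>PiM UNIV P)))"
    using Rne Cne by (intro sum.cong refl) (auto simp: eq2)
  also have "\<dots> = (\<Sum>t'\<in>?R. \<Sum>A\<in>?C. \<integral>z. g (t',A,z) \<partial>PiM UNIV P) / (real \<tau> * real (card ?C))"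
    by (simp add: sum_distrib_left[symmetric] sum_divide_distrib[symmetric])
  finally show "(\<integral>y. g y \<partial>sample_law P \<tau> m s) = (\<Sum>t'\<in>?R. \<Sum>A\<in>?C. \<integral>z. g (t',A,z) \<partial>PiM UNIV P) / (real \<tau> * real (card ?C))" .
qed



lemma integrable_if_const:
  "(b \<Longrightarrow> integrable M f) \<Longrightarrow> integrable M (\<lambda>z. if b then f z else (0::real))"
  by (cases b) auto

lemma SL_sum_integral:
  fixes P :: "'n::finite \<Rightarrow> 'z measure" and h :: "'n \<Rightarrow> 'z \<Rightarrow> real"
  assumes P: "\<And>i. prob_space (P i)" and \<tau>: "1 \<le> \<tau>" and m: "1 \<le> m" "m \<le> CARD('n)"
    and hi: "\<And>i. integrable (P i) (h i)" and t: "t \<in> {s*\<tau>+1..(s+1)*\<tau>}"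
  shows "integrable (sample_law P \<tau> m s)
           (\<lambda>y. if fst y = t then (\<Sum>i\<in>UNIV. if i \<in> fst (snd y) then h i (snd (snd y) i) else 0) else 0)"
    and "(\<integral>y. (if fst y = t then (\<Sum>i\<in>UNIV. if i \<in> fst (snd y) then h i (snd (snd y) i) else 0) else 0) \<partial>sample_law P \<tau> m s)
         = (real m / real CARD('n)) * (\<Sum>i\<in>UNIV. \<integral>\<xi>. h i \<xi> \<partial>P i) / real \<tau>"
proof -
  let ?R = "{s*\<tau>+1..(s+1)*\<tau>}" and ?C = "{A::'n set. card A = m}"
  let ?g = "\<lambda>y. if fst y = t then (\<Sum>i\<in>UNIV. if i \<in> fst (snd y) then h i (snd (snd y) i) else 0) else 0"
  have hm[measurable]: "\<And>i. h i \<in> borel_measurable (P i)" using hi by auto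
  have gm: "?g \<in> borel_measurable (sample_law P \<tau> m s)"
    unfolding sample_law_def by measurable
  have int1: "integrable (PiM UNIV P) (\<lambda>z. h i (z i))" for i
    by (rule PiM_comp_int(1)[OF P hi])
  have gi: "integrable (PiM UNIV P) (\<lambda>z. ?g (t', A, z))" for t' A
    by (auto intro!: integrable_if_const Bochner_Integration.integrable_sum int1)
  have gint: "(\<integral>z. ?g (t', A, z) \<partial>PiM UNIV P) = (if t' = t then (\<Sum>i\<in>UNIV. if i \<in> A then (\<integral>\<xi>. h i \<xi> \<partial>P i) else 0) else 0)" for t' A
  proof -
    have e1: "(\<integral>z. (if i \<in> A then h i (z i) else 0) \<partial>PiM UNIV P) = (if i \<in> A then (\<integral>\<xi>. h i \<xi> \<partial>P i) else 0)" for i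
      using PiM_comp_int(2)[where P=P and h="h i" and i=i, OF P hi[of i]] by (cases "i \<in> A") auto
    have "(\<integral>z. (\<Sum>i\<in>UNIV. if i \<in> A then h i (z i) else 0) \<partial>PiM UNIV P) = (\<Sum>i\<in>UNIV. \<integral>z. (if i \<in> A then h i (z i) else 0) \<partial>PiM UNIV P)"
      by (rule Bochner_Integration.integral_sum) (auto intro!: integrable_if_const int1)
    then show ?thesis by (cases "t' = t") (simp_all add: e1 cong: if_cong)
  qed
  show "integrable (sample_law P \<tau> m s) ?g"
    by (rule SL_integral(1)[OF P \<tau> m gm gi])
  have "(\<integral>y. ?g y \<partial>sample_law P \<tau> m s) = (\<Sum>t'\<in>?R. \<Sum>A\<in>?C. \<integral>z. ?g (t',A,z) \<partial>PiM UNIV P) / (real \<tau> * real (card ?C))"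
    by (rule SL_integral(2)[OF P \<tau> m gm gi])
  also have "(\<Sum>t'\<in>?R. \<Sum>A\<in>?C. \<integral>z. ?g (t',A,z) \<partial>PiM UNIV P) = (\<Sum>t'\<in>?R. \<Sum>A\<in>?C. (if t' = t then (\<Sum>i\<in>UNIV. if i \<in> A then (\<integral>\<xi>. h i \<xi> \<partial>P i) else 0) else 0))"
    by (simp only: gint)
  also have "\<dots> = (\<Sum>t'\<in>?R. if t' = t then (\<Sum>A\<in>?C. \<Sum>i\<in>UNIV. if i \<in> A then (\<integral>\<xi>. h i \<xi> \<partial>P i) else 0) else 0)"
    by (intro sum.cong refl) auto
  also have "\<dots> = (\<Sum>A\<in>?C. \<Sum>i\<in>UNIV. if i \<in> A then (\<integral>\<xi>. h i \<xi> \<partial>P i) else 0)"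
    using t by (simp only: sum.delta finite_atLeastAtMost if_True)
  also have "\<dots> = (\<Sum>i\<in>UNIV. \<Sum>A\<in>?C. if i \<in> A then (\<integral>\<xi>. h i \<xi> \<partial>P i) else 0)"
    by (rule sum.swap)
  also have "\<dots> = (\<Sum>i\<in>UNIV. real (card {A::'n set. card A = m \<and> i \<in> A}) * (\<integral>\<xi>. h i \<xi> \<partial>P i))"
  proof (intro sum.cong refl)
    fix i :: 'n
    have "(\<Sum>A\<in>?C. if i \<in> A then (\<integral>\<xi>. h i \<xi> \<partial>P i) else 0) = (\<Sum>A\<in>{A\<in>?C. i \<in> A}. (\<integral>\<xi>. h i \<xi> \<partial>P i))"
      by (rule sum.inter_filter[symmetric]) simp
    also have "{A\<in>?C. i \<in> A} = {A::'n set. card A = m \<and> i \<in> A}" by auto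
    finally show "(\<Sum>A\<in>?C. if i \<in> A then (\<integral>\<xi>. h i \<xi> \<partial>P i) else 0) = real (card {A::'n set. card A = m \<and> i \<in> A}) * (\<integral>\<xi>. h i \<xi> \<partial>P i)"
      by simp
  qed
  also have "\<dots> = (\<Sum>i\<in>UNIV. (real m * real (card ?C) / real CARD('n)) * (\<integral>\<xi>. h i \<xi> \<partial>P i))"
  proof (intro sum.cong refl)
    fix i :: 'n
    have "real (card {A::'n set. card A = m \<and> i \<in> A}) * real CARD('n) = real m * real (card ?C)"
      using card_subsets_with[OF m(1), of i] by (metis of_nat_mult)
    then show "real (card {A::'n set. card A = m \<and> i \<in> A}) * (\<integral>\<xi>. h i \<xi> \<partial>P i) = (real m * real (card ?C) / real CARD('n)) * (\<integral>\<xi>. h i \<xi> \<partial>P i)"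
      by (simp add: field_simps)
  qed
  finally have E1: "(\<integral>y. ?g y \<partial>sample_law P \<tau> m s) = (\<Sum>i\<in>UNIV. (real m * real (card ?C) / real CARD('n)) * (\<integral>\<xi>. h i \<xi> \<partial>P i)) / (real \<tau> * real (card ?C))" .
  have Kpos: "card ?C > 0"
  proof -
    obtain A0 :: "'n set" where "card A0 = m" using obtain_subset_with_card_n[of m "UNIV::'n set"] m by auto
    then have "?C \<noteq> {}" by auto
    then show ?thesis by (simp add: card_gt_0_iff)
  qed
  have E2: "(\<Sum>i\<in>UNIV. (real m * real (card ?C) / real CARD('n)) * (\<integral>\<xi>. h i \<xi> \<partial>P i)) = (real m * real (card ?C) / real CARD('n)) * (\<Sum>i\<in>UNIV. (\<integral>\<xi>. h i \<xi> \<partial>P i))"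
    by (rule sum_distrib_left[symmetric])
  define K where "K = real (card ?C)"
  define Z where "Z = (\<Sum>i\<in>UNIV. (\<integral>\<xi>. h i \<xi> \<partial>P i))"
  have Kp: "K > 0" using Kpos by (simp add: K_def)
  have "(\<integral>y. ?g y \<partial>sample_law P \<tau> m s) = (real m * K / real CARD('n)) * Z / (real \<tau> * K)"
    using E1 E2 unfolding K_def Z_def by simp
  also have "\<dots> = (real m / real CARD('n)) * Z / real \<tau>" using Kp by (simp add: field_simps)
  finally show "(\<integral>y. ?g y \<partial>sample_law P \<tau> m s) = (real m / real CARD('n)) * (\<Sum>i\<in>UNIV. \<integral>\<xi>. h i \<xi> \<partial>P i) / real \<tau>"
    unfolding Z_def .
qed



lemma hist_indep:
  fixes M :: "'a measure" and P :: "'n::finite \<Rightarrow> 'z measure"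
    and w :: "nat \<Rightarrow> 'a \<Rightarrow> 'w::topological_space" and lam :: "nat \<Rightarrow> 'a \<Rightarrow> real^'n"
  assumes MP: "prob_space M"
    and ind: "prob_space.indep_set M
        (sigma_sets (space M) (history_events M P \<tau> m w lam tp U \<zeta> s))
        (sigma_sets (space M) (rv_events M (sample_law P \<tau> m s) (dual_sample tp U \<zeta> s)))"
    and t: "t \<le> (s+1)*\<tau>"
    and A: "A \<in> sets (borel \<Otimes>\<^sub>M borel)" and B: "B \<in> sets (sample_law P \<tau> m s)"
  shows "measure M (((\<lambda>\<omega>. (lam s \<omega>, w t \<omega>)) -` A \<inter> space M) \<inter> (dual_sample tp U \<zeta> s -` B \<inter> space M))
       = measure M ((\<lambda>\<omega>. (lam s \<omega>, w t \<omega>)) -` A \<inter> space M) * measure M (dual_sample tp U \<zeta> s -` B \<inter> space M)"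
proof -
  interpret prob_space M by fact
  let ?H = "history_events M P \<tau> m w lam tp U \<zeta> s"
  let ?M' = "sigma (space M) ?H"
  have Hsub: "?H \<subseteq> Pow (space M)"
    unfolding history_events_def rv_events_def by auto
  have sp: "space ?M' = space M" using Hsub by (rule space_measure_of)
  have ss: "sets ?M' = sigma_sets (space M) ?H" using Hsub by (rule sets_measure_of)
  have lm: "lam s \<in> measurable ?M' borel"
  proof (rule measurableI)
    fix x assume "x \<in> space ?M'" then show "lam s x \<in> space borel" by simp
  next
    fix C :: "(real^'n) set" assume "C \<in> sets borel"
    then have "lam s -` C \<inter> space M \<in> ?H"
      unfolding history_events_def rv_events_def by blast
    then show "lam s -` C \<inter> space ?M' \<in> sets ?M'" unfolding sp ss by blast
  qed
  have wm: "w t \<in> measurable ?M' borel"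
  proof (rule measurableI)
    fix x assume "x \<in> space ?M'" then show "w t x \<in> space borel" by simp
  next
    fix C :: "'w set" assume "C \<in> sets borel"
    then have "w t -` C \<inter> space M \<in> ?H"
      unfolding history_events_def rv_events_def using t by blast
    then show "w t -` C \<inter> space ?M' \<in> sets ?M'" unfolding sp ss by blast
  qed
  have Xm: "(\<lambda>\<omega>. (lam s \<omega>, w t \<omega>)) \<in> measurable ?M' (borel \<Otimes>\<^sub>M borel)"
    using lm wm by (rule measurable_Pair)
  have a: "(\<lambda>\<omega>. (lam s \<omega>, w t \<omega>)) -` A \<inter> space M \<in> sigma_sets (space M) ?H"
    using measurable_sets[OF Xm A] unfolding sp ss .
  have b: "dual_sample tp U \<zeta> s -` B \<inter> space M \<in> sigma_sets (space M) (rv_events M (sample_law P \<tau> m s) (dual_sample tp U \<zeta> s))"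
    using B unfolding rv_events_def by blast
  show ?thesis using indep_setD[OF ind a b] .
qed



lemma vec_nth_meas[measurable (raw)]: "f \<in> borel_measurable M \<Longrightarrow> (\<lambda>x. (f x :: real^'n::finite) $ i) \<in> borel_measurable M"
  by (rule measurable_compose[OF _ borel_measurable_nth])

lemma Lambda_closed: "closed (Lambda_set :: (real^'n::finite) set)"
proof -
  have "Lambda_set = {l::real^'n. (\<forall>i. 0 \<le> l$i) \<and> (\<Sum>i\<in>UNIV. l$i) = 1}" by (simp add: Lambda_set_def)
  moreover have "closed {l::real^'n. (\<forall>i. 0 \<le> l$i) \<and> (\<Sum>i\<in>UNIV. l$i) = 1}"
    by (intro closed_Collect_conj closed_Collect_all closed_Collect_le closed_Collect_eq continuous_intros)
  ultimately show ?thesis by simp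
qed

lemma Lambda_convex: "convex (Lambda_set :: (real^'n::finite) set)"
  unfolding convex_def Lambda_set_def
  by (auto simp: sum.distrib sum_distrib_left[symmetric])

lemma Lambda_ne: "(Lambda_set :: (real^'n::finite) set) \<noteq> {}"
proof -
  have "(\<chi> i. 1 / real CARD('n)) \<in> (Lambda_set :: (real^'n) set)"
    by (simp add: Lambda_set_def)
  then show ?thesis by blast
qed

lemma Lambda_comp: "l \<in> Lambda_set \<Longrightarrow> 0 \<le> l$i \<and> l$i \<le> 1"
proof -
  assume l: "l \<in> Lambda_set"
  then have "\<forall>j. 0 \<le> l$j" "(\<Sum>j\<in>UNIV. l$j) = 1" by (auto simp: Lambda_set_def)
  moreover then have "l$i \<le> (\<Sum>j\<in>UNIV. l$j)" by (intro member_le_sum) auto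
  ultimately show ?thesis by simp
qed

lemma Lambda_diff: "l \<in> Lambda_set \<Longrightarrow> k \<in> Lambda_set \<Longrightarrow> \<bar>(l - k)$i\<bar> \<le> 1"
  using Lambda_comp[of l i] Lambda_comp[of k i] by auto

lemma proj_ineq:
  fixes y l :: "real^'n::finite"
  assumes "l \<in> Lambda_set"
  shows "(norm (closest_point Lambda_set y - l))\<^sup>2 \<le> (norm (y - l))\<^sup>2"
proof -
  have "dist (closest_point Lambda_set y) (closest_point Lambda_set l) \<le> dist y l"
    by (rule closest_point_lipschitz[OF Lambda_convex Lambda_closed Lambda_ne])
  moreover have "closest_point Lambda_set l = l" using assms by (rule closest_point_self)
  ultimately have "norm (closest_point Lambda_set y - l) \<le> norm (y - l)" by (simp add: dist_norm)
  then show ?thesis by (simp add: power_mono)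
qed

lemma expand_sq:
  fixes x v l :: "real^'n::finite"
  shows "(norm (x + a *\<^sub>R v - l))\<^sup>2 = (norm (x - l))\<^sup>2 + 2 * a * inner v (x - l) + a\<^sup>2 * (norm v)\<^sup>2"
proof -
  have "x + a *\<^sub>R v - l = (x - l) + a *\<^sub>R v" by simp
  then have "(norm (x + a *\<^sub>R v - l))\<^sup>2 = inner ((x - l) + a *\<^sub>R v) ((x - l) + a *\<^sub>R v)"
    by (metis power2_norm_eq_inner)
  also have "\<dots> = inner (x - l) (x - l) + 2 * a * inner v (x - l) + a\<^sup>2 * inner v v"
    by (simp add: inner_add_left inner_add_right inner_commute power2_eq_square algebra_simps)
  finally show ?thesis by (simp add: power2_norm_eq_inner)
qed

lemma integral_le_const_prob:
  fixes f :: "'a \<Rightarrow> real"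
  assumes "prob_space M" "0 \<le> B" "\<And>x. x \<in> space M \<Longrightarrow> f x \<le> B"
  shows "(\<integral>x. f x \<partial>M) \<le> B"
proof (cases "integrable M f")
  case True
  interpret prob_space M by fact
  have "(\<integral>x. f x \<partial>M) \<le> (\<integral>x. B \<partial>M)" by (rule integral_mono) (use True assms in auto)
  then show ?thesis by (simp add: prob_space)
next
  case False then show ?thesis using assms by (simp add: not_integrable_integral_eq)
qed

lemma integrable_bounded_prob:
  fixes f :: "'a \<Rightarrow> real"
  assumes "prob_space M" "f \<in> borel_measurable M" "\<And>x. x \<in> space M \<Longrightarrow> \<bar>f x\<bar> \<le> B"
  shows "integrable M f"
proof -
  interpret prob_space M by fact
  show ?thesis
    by (rule Bochner_Integration.integrable_bound[of M "\<lambda>_. B"]) (use assms in \<open>auto intro!: AE_I2 intro: order.trans[OF _ abs_ge_self]\<close>)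
qed

lemma nn_abs_le_integral:
  fixes g \<phi> :: "'a \<Rightarrow> real"
  assumes "integrable M \<phi>" "\<And>y. y \<in> space M \<Longrightarrow> \<bar>g y\<bar> \<le> \<phi> y"
  shows "(\<integral>\<^sup>+y. ennreal \<bar>g y\<bar> \<partial>M) \<le> ennreal (\<integral>y. \<phi> y \<partial>M)"
proof -
  have "(\<integral>\<^sup>+y. ennreal \<bar>g y\<bar> \<partial>M) \<le> (\<integral>\<^sup>+y. ennreal (\<phi> y) \<partial>M)"
    by (intro nn_integral_mono ennreal_leI) (use assms in auto)
  also have "\<dots> = ennreal (\<integral>y. \<phi> y \<partial>M)"
    by (rule nn_integral_eq_integral) (use assms in \<open>auto intro!: AE_I2 order.trans[OF abs_ge_zero]\<close>)
  finally show ?thesis .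
qed


theorem mainTheorem9:
  fixes M :: "'a measure"
    and P :: "'n::finite \<Rightarrow> 'z measure"
    and loss :: "'n \<Rightarrow> 'w::euclidean_space \<Rightarrow> 'z \<Rightarrow> real"
    and f :: "'n \<Rightarrow> 'w \<Rightarrow> real"
    and gf :: "'n \<Rightarrow> 'w \<Rightarrow> 'w"
    and gl :: "'n \<Rightarrow> 'w \<Rightarrow> 'z \<Rightarrow> 'w"
    and W :: "'w set"
    and L G_w G_lam D_W D_Lam sigma_w sigma_lam \<gamma> :: real
    and S \<tau> T m :: nat
    and w :: "nat \<Rightarrow> 'a \<Rightarrow> 'w"
    and lam :: "nat \<Rightarrow> 'a \<Rightarrow> real^'n"
    and tp :: "nat \<Rightarrow> 'a \<Rightarrow> nat"
    and U :: "nat \<Rightarrow> 'a \<Rightarrow> 'n set"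
    and \<zeta> :: "nat \<Rightarrow> 'n \<Rightarrow> 'a \<Rightarrow> 'z"
    and l :: "real^'n"
  assumes M: "prob_space M"
    and P: "\<And>i. prob_space (P i)"
    and W: "closed W" "convex W"
    \<comment> \<open>losses and local objectives\<close>
    and loss_meas: "\<And>i. (\<lambda>(x, \<xi>). loss i x \<xi>) \<in> borel_measurable (borel \<Otimes>\<^sub>M P i)"
    and f_def: "\<And>i x. x \<in> W \<Longrightarrow> f i x = (\<integral>\<xi>. loss i x \<xi> \<partial>P i)"
    \<comment> \<open>(A1) L-smoothness of the f i and of F\<close>
    and A1_grad: "\<And>i x. x \<in> W \<Longrightarrow> GDERIV (f i) x :> gf i x"
    and A1_fi: "\<And>i x y. x \<in> W \<Longrightarrow> y \<in> W \<Longrightarrow> norm (gf i x - gf i y) \<le> L * norm (x - y)"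
    and A1_F: "\<And>x y l1 l2. x \<in> W \<Longrightarrow> y \<in> W \<Longrightarrow> l1 \<in> Lambda_set \<Longrightarrow> l2 \<in> Lambda_set \<Longrightarrow>
        norm (gradF_joint f gf x l1 - gradF_joint f gf y l2) \<le> L * norm ((x, l1) - (y, l2))"
    \<comment> \<open>(A2) bounded gradients\<close>
    and A2_w: "\<And>i x. x \<in> W \<Longrightarrow> norm (gf i x) \<le> G_w"
    and A2_lam: "\<And>x. x \<in> W \<Longrightarrow> norm (gradF_lam f x) \<le> G_lam"
    \<comment> \<open>(A3) bounded domains\<close>
    and A3_W: "\<And>x y. x \<in> W \<Longrightarrow> y \<in> W \<Longrightarrow> dist x y \<le> D_W"
    and A3_Lam: "\<And>l1 l2 :: real^'n. l1 \<in> Lambda_set \<Longrightarrow> l2 \<in> Lambda_set \<Longrightarrow> dist l1 l2 \<le> D_Lam"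
    \<comment> \<open>(A4) bounded variances\<close>
    and A4_w_grad: "\<And>i x \<xi>. x \<in> W \<Longrightarrow> GDERIV (\<lambda>y. loss i y \<xi>) x :> gl i x \<xi>"
    and A4_w: "\<And>i x. x \<in> W \<Longrightarrow>
        (\<integral>\<^sup>+\<xi>. ennreal ((norm (gl i x \<xi> - gf i x))\<^sup>2) \<partial>P i) \<le> ennreal (sigma_w\<^sup>2)"
    and A4_lam: "\<And>x. x \<in> W \<Longrightarrow>
        (\<Sum>i\<in>UNIV. \<integral>\<^sup>+\<xi>. ennreal ((norm (tildeGradF loss i x \<xi> - gradF_lam f x))\<^sup>2) \<partial>P i)
          \<le> ennreal (real CARD('n) * sigma_lam\<^sup>2)"
    \<comment> \<open>parameters\<close>
    and \<tau>: "\<tau> \<ge> 1" and T: "T = S * \<tau>"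
    and m: "1 \<le> m" "m \<le> CARD('n)"
    and \<gamma>: "\<gamma> > 0"
    \<comment> \<open>the DRDM iterates\<close>
    and w_in: "\<And>t \<omega>. \<omega> \<in> space M \<Longrightarrow> w t \<omega> \<in> W"
    and w_meas: "\<And>t. w t \<in> borel_measurable M"
    and lam_meas: "\<And>s. lam s \<in> borel_measurable M"
    and lam0: "\<And>\<omega>. \<omega> \<in> space M \<Longrightarrow> lam 0 \<omega> \<in> Lambda_set"
    and lam_step: "\<And>s \<omega>. s < S \<Longrightarrow> \<omega> \<in> space M \<Longrightarrow>
        lam (Suc s) \<omega> = closest_point Lambda_set
          (lam s \<omega> + (real \<tau> * \<gamma>) *\<^sub>R dual_vec m loss (U s \<omega>) (w (tp s \<omega>) \<omega>) (\<lambda>i. \<zeta> s i \<omega>))"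
    \<comment> \<open>the server's fresh samples in round s: their law, and independence from the history\<close>
    and sample_meas: "\<And>s. s < S \<Longrightarrow> dual_sample tp U \<zeta> s \<in> measurable M (sample_law P \<tau> m s)"
    and sample_law: "\<And>s. s < S \<Longrightarrow> distr M (sample_law P \<tau> m s) (dual_sample tp U \<zeta> s) = sample_law P \<tau> m s"
    and sample_indep: "\<And>s. s < S \<Longrightarrow> prob_space.indep_set M
        (sigma_sets (space M) (history_events M P \<tau> m w lam tp U \<zeta> s))
        (sigma_sets (space M) (rv_events M (sample_law P \<tau> m s) (dual_sample tp U \<zeta> s)))"
    and l: "l \<in> Lambda_set"
  shows "(1 / real T) * (\<Sum>s<S. \<Sum>t\<in>{s*\<tau>+1..(s+1)*\<tau>}.
            (\<integral>\<omega>. Fobj f (w t \<omega>) l - Fobj f (w t \<omega>) (lam s \<omega>) \<partial>M))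
         \<le> D_Lam\<^sup>2 / (2 * \<gamma> * real T) + \<gamma> * real \<tau> * G_lam\<^sup>2 / 2
            + \<gamma> * real \<tau> * sigma_lam\<^sup>2 / (2 * real m)"
proof -
  interpret prob_space M by (rule M)
  let ?N = "real CARD('n)"
  define c where "c = real CARD('n) / real m"
  have Npos: "?N > 0" by simp
  have mpos: "real m > 0" using m by simp
  have cpos: "c > 0" using mpos by (simp add: c_def)
  have cm: "real m / ?N * c = 1" using mpos by (simp add: c_def)
  have c1: "1 \<le> c" using m mpos by (simp add: c_def)
  have Wb[measurable]: "W \<in> sets borel" using W(1) by (rule borel_closed)
  have Lb[measurable]: "(Lambda_set :: (real^'n) set) \<in> sets borel" by (rule borel_closed[OF Lambda_closed])
  have lossm[measurable]: "\<And>i. (\<lambda>(x, \<xi>). loss i x \<xi>) \<in> borel_measurable (borel \<Otimes>\<^sub>M P i)" by (rule loss_meas)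
  have lm: "\<And>i x. (\<lambda>\<xi>. loss i x \<xi>) \<in> borel_measurable (P i)" by measurable
  have LF: "integrable (P i) (\<lambda>\<xi>. (loss i x \<xi>)\<^sup>2) \<and> integrable (P i) (\<lambda>\<xi>. loss i x \<xi>) \<and>
      ?N * (\<Sum>i\<in>UNIV. \<integral>\<xi>. (loss i x \<xi>)\<^sup>2 \<partial>P i) \<le> sigma_lam\<^sup>2 + (norm (gradF_lam f x))\<^sup>2"
    if "x \<in> W" for i x
    using loss_facts[where P=P and loss=loss and x=x and f=f and sg=sigma_lam, OF P lm f_def[OF that] A4_lam[OF that]]
    by auto
  have G0: "0 \<le> G_lam" using A2_lam w_in[of _ 0] norm_ge_zero order.trans
    by (metis M prob_space.not_empty subsetI subset_empty)
  have L2b: "?N * (\<Sum>i\<in>UNIV. \<integral>\<xi>. (loss i x \<xi>)\<^sup>2 \<partial>P i) \<le> sigma_lam\<^sup>2 + G_lam\<^sup>2" if "x \<in> W" for x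
  proof -
    have "(norm (gradF_lam f x))\<^sup>2 \<le> G_lam\<^sup>2" using A2_lam[OF that] by (simp add: power_mono)
    moreover have "?N * (\<Sum>i\<in>UNIV. \<integral>\<xi>. (loss i x \<xi>)\<^sup>2 \<partial>P i) \<le> sigma_lam\<^sup>2 + (norm (gradF_lam f x))\<^sup>2"
      using LF[OF that] by blast
    ultimately show ?thesis by linarith
  qed
  have L2nn: "0 \<le> (\<integral>\<xi>. (loss i x \<xi>)\<^sup>2 \<partial>P i)" for i x by simp
  have L2b': "(\<Sum>i\<in>UNIV. \<integral>\<xi>. (loss i x \<xi>)\<^sup>2 \<partial>P i) \<le> sigma_lam\<^sup>2 + G_lam\<^sup>2" if "x \<in> W" for x
  proof -
    have "(\<Sum>i\<in>UNIV. \<integral>\<xi>. (loss i x \<xi>)\<^sup>2 \<partial>P i) \<le> ?N * (\<Sum>i\<in>UNIV. \<integral>\<xi>. (loss i x \<xi>)\<^sup>2 \<partial>P i)"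
    proof -
      have S0: "0 \<le> (\<Sum>i\<in>UNIV. \<integral>\<xi>. (loss i x \<xi>)\<^sup>2 \<partial>P i)" by (intro sum_nonneg L2nn)
      have N1: "1 \<le> ?N" by (simp add: Suc_le_eq)
      show ?thesis using mult_right_mono[OF N1 S0] by simp
    qed
    then show ?thesis using L2b[OF that] by linarith
  qed
  have lamL: "lam s \<omega> \<in> Lambda_set" if "s \<le> S" "\<omega> \<in> space M" for s \<omega>
    using that
  proof (induction s)
    case 0 then show ?case by (simp add: lam0)
  next
    case (Suc s)
    then show ?case
      by (simp add: lam_step closest_point_in_set[OF Lambda_closed Lambda_ne])
  qed
  have D0: "0 \<le> D_Lam" using A3_Lam[OF l l] by simp
  have aBnd: "(norm (lam s \<omega> - l))\<^sup>2 \<le> D_Lam\<^sup>2" if "s \<le> S" "\<omega> \<in> space M" for s \<omega>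
  proof -
    have "norm (lam s \<omega> - l) \<le> D_Lam" using A3_Lam[OF lamL[OF that] l] by (simp add: dist_norm)
    then show ?thesis by (simp add: power_mono)
  qed
  have aInt: "integrable M (\<lambda>\<omega>. (norm (lam s \<omega> - l))\<^sup>2)" if "s \<le> S" for s
    by (rule integrable_bounded_prob[OF M]) (use lam_meas[of s] aBnd[OF that] in auto)
  define a where "a s = (\<integral>\<omega>. (norm (lam s \<omega> - l))\<^sup>2 \<partial>M)" for s
  define Q where "Q s = (\<Sum>t\<in>{s*\<tau>+1..(s+1)*\<tau>}. (\<integral>\<omega>. Fobj f (w t \<omega>) l - Fobj f (w t \<omega>) (lam s \<omega>) \<partial>M))" for s
  have round: "Q s \<le> (a s - a (Suc s)) / (2 * \<gamma>) + (real \<tau>)\<^sup>2 * \<gamma> * (sigma_lam\<^sup>2 + G_lam\<^sup>2) / (2 * real m)"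
    if sS: "s < S" for s
  proof -
    have sS': "s \<le> S" "Suc s \<le> S" using sS by auto
    let ?R = "{s*\<tau>+1..(s+1)*\<tau>}"
    define Y where "Y = dual_sample tp U \<zeta> s"
    define SL where "SL = sample_law P \<tau> m s"
    define X where "X t \<omega> = (lam s \<omega>, w t \<omega>)" for t \<omega>
    define g1 where "g1 t x y = (if fst x \<in> Lambda_set \<and> snd x \<in> W then
        (if fst y = t then (\<Sum>i\<in>UNIV. if i \<in> fst (snd y) then c * (fst x - l)$i * loss i (snd x) (snd (snd y) i) else 0) else 0) else 0)"
      for t :: nat and x :: "(real^'n) \<times> 'w" and y :: "nat \<times> 'n set \<times> ('n \<Rightarrow> 'z)"
    define g2 where "g2 t x y = (if snd x \<in> W then
        (if fst y = t then (\<Sum>i\<in>UNIV. if i \<in> fst (snd y) then c\<^sup>2 * (loss i (snd x) (snd (snd y) i))\<^sup>2 else 0) else 0) else 0)"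
      for t :: nat and x :: "(real^'n) \<times> 'w" and y :: "nat \<times> 'n set \<times> ('n \<Rightarrow> 'z)"
    define K1 where "K1 x = (if fst x \<in> Lambda_set \<and> snd x \<in> W then
        (\<Sum>i\<in>UNIV. (fst x - l)$i * (\<integral>\<xi>. loss i (snd x) \<xi> \<partial>P i)) / real \<tau> else 0)"
      for x :: "(real^'n) \<times> 'w"
    have Ym: "Y \<in> measurable M SL" unfolding Y_def SL_def by (rule sample_meas[OF sS])
    have Ylaw: "distr M SL Y = SL" unfolding Y_def SL_def by (rule sample_law[OF sS])
    have Xm: "X t \<in> measurable M (borel \<Otimes>\<^sub>M borel)" for t
      unfolding X_def[abs_def] using lam_meas[of s] w_meas[of t] by measurable
    have indep: "measure M ((X t -` A \<inter> space M) \<inter> (Y -` B \<inter> space M)) = measure M (X t -` A \<inter> space M) * measure M (Y -` B \<inter> space M)"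
      if "t \<in> ?R" "A \<in> sets (borel \<Otimes>\<^sub>M borel)" "B \<in> sets SL" for t A B
      unfolding X_def[abs_def] Y_def
      by (rule hist_indep[OF M sample_indep[OF sS]]) (use that in \<open>auto simp: SL_def\<close>)
    have g1m: "(\<lambda>z. g1 t (fst z) (snd z)) \<in> borel_measurable ((borel \<Otimes>\<^sub>M borel) \<Otimes>\<^sub>M SL)" for t
      unfolding g1_def SL_def sample_law_def by measurable
    have g2m: "(\<lambda>z. g2 t (fst z) (snd z)) \<in> borel_measurable ((borel \<Otimes>\<^sub>M borel) \<Otimes>\<^sub>M SL)" for t
      unfolding g2_def SL_def sample_law_def by measurable
    have intm[measurable]: "(\<lambda>x. \<integral>\<xi>. loss i (snd x) \<xi> \<partial>P i) \<in> borel_measurable (borel \<Otimes>\<^sub>M (borel :: 'w measure))" for i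
    proof -
      interpret Pi: prob_space "P i" by (rule P)
      have "case_prod (\<lambda>x \<xi>. loss i (snd x) \<xi>) \<in> borel_measurable ((borel \<Otimes>\<^sub>M (borel :: 'w measure)) \<Otimes>\<^sub>M P i)"
        by measurable
      then show ?thesis by (rule Pi.borel_measurable_lebesgue_integral)
    qed
    have K1m: "K1 \<in> borel_measurable (borel \<Otimes>\<^sub>M borel)"
      unfolding K1_def by measurable
    have Pp: "prob_space (P i)" for i by (rule P)
    have int_c1: "integrable (P i) (\<lambda>\<xi>. k * (1 + (loss i x \<xi>)\<^sup>2))" if "x \<in> W" for i x k
    proof -
      interpret Pi: prob_space "P i" by (rule P)
      show ?thesis using LF[OF that, of i] by auto
    qed
    have int_c2: "integrable (P i) (\<lambda>\<xi>. k * (loss i x \<xi>)\<^sup>2)" if "x \<in> W" for i x k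
      using LF[OF that, of i] by auto
    have int_c3: "integrable (P i) (\<lambda>\<xi>. k * loss i x \<xi>)" if "x \<in> W" for i x k
      using LF[OF that, of i] by auto
    have bnd1: "(\<integral>\<^sup>+y. ennreal \<bar>g1 t x y\<bar> \<partial>SL) \<le> ennreal (?N + sigma_lam\<^sup>2 + G_lam\<^sup>2)" if t: "t \<in> ?R" for t x
    proof (cases "fst x \<in> Lambda_set \<and> snd x \<in> W")
      case True
      define \<phi> where "\<phi> y = (if fst y = t then (\<Sum>i\<in>UNIV. if i \<in> fst (snd y) then (\<lambda>i \<xi>. c * (1 + (loss i (snd x) \<xi>)\<^sup>2)) i (snd (snd y) i) else 0) else 0)" for y :: "nat \<times> 'n set \<times> ('n \<Rightarrow> 'z)"
      have S1: "integrable SL \<phi>" "(\<integral>y. \<phi> y \<partial>SL) = (real m / ?N) * (\<Sum>i\<in>UNIV. \<integral>\<xi>. c * (1 + (loss i (snd x) \<xi>)\<^sup>2) \<partial>P i) / real \<tau>"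
        unfolding \<phi>_def SL_def
        using SL_sum_integral[where h="\<lambda>i \<xi>. c * (1 + (loss i (snd x) \<xi>)\<^sup>2)", OF P \<tau> m int_c1[OF conjunct2[OF True]] t]
        by auto
      have "(\<Sum>i\<in>UNIV. \<integral>\<xi>. c * (1 + (loss i (snd x) \<xi>)\<^sup>2) \<partial>P i) = c * (\<Sum>i\<in>UNIV. 1 + (\<integral>\<xi>. (loss i (snd x) \<xi>)\<^sup>2 \<partial>P i))"
      proof -
        have e: "(\<integral>\<xi>. c * (1 + (loss i (snd x) \<xi>)\<^sup>2) \<partial>P i) = c * (1 + (\<integral>\<xi>. (loss i (snd x) \<xi>)\<^sup>2 \<partial>P i))" for i
        proof -
          interpret Pi: prob_space "P i" by (rule P)
          show ?thesis using LF[OF conjunct2[OF True], of i] by (simp add: Pi.prob_space)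
        qed
        show ?thesis by (simp only: e sum_distrib_left)
      qed
      also have "\<dots> = c * (?N + (\<Sum>i\<in>UNIV. \<integral>\<xi>. (loss i (snd x) \<xi>)\<^sup>2 \<partial>P i))" by (simp add: sum.distrib)
      finally have "(\<integral>y. \<phi> y \<partial>SL) = (real m / ?N) * (c * (?N + (\<Sum>i\<in>UNIV. \<integral>\<xi>. (loss i (snd x) \<xi>)\<^sup>2 \<partial>P i))) / real \<tau>"
        using S1(2) by simp
      also have "\<dots> = (?N + (\<Sum>i\<in>UNIV. \<integral>\<xi>. (loss i (snd x) \<xi>)\<^sup>2 \<partial>P i)) / real \<tau>"
        unfolding mult.assoc[symmetric] cm by simp
      also have "\<dots> \<le> ?N + (\<Sum>i\<in>UNIV. \<integral>\<xi>. (loss i (snd x) \<xi>)\<^sup>2 \<partial>P i)"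
      proof -
        have Z0: "0 \<le> ?N + (\<Sum>i\<in>UNIV. \<integral>\<xi>. (loss i (snd x) \<xi>)\<^sup>2 \<partial>P i)"
          by (intro add_nonneg_nonneg sum_nonneg L2nn) simp
        show ?thesis using Z0 \<tau> by (auto simp: divide_le_eq mult_le_cancel_left1)
      qed
      also have "\<dots> \<le> ?N + sigma_lam\<^sup>2 + G_lam\<^sup>2" using L2b'[OF conjunct2[OF True]] by simp
      finally have ile: "(\<integral>y. \<phi> y \<partial>SL) \<le> ?N + sigma_lam\<^sup>2 + G_lam\<^sup>2" .
      have pw: "\<bar>g1 t x y\<bar> \<le> \<phi> y" for y
      proof (cases "fst y = t")
        case True2: True
        have "\<bar>g1 t x y\<bar> = \<bar>\<Sum>i\<in>UNIV. if i \<in> fst (snd y) then c * (fst x - l)$i * loss i (snd x) (snd (snd y) i) else 0\<bar>"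
          using True True2 by (simp add: g1_def)
        also have "\<dots> \<le> (\<Sum>i\<in>UNIV. \<bar>if i \<in> fst (snd y) then c * (fst x - l)$i * loss i (snd x) (snd (snd y) i) else 0\<bar>)"
          by (rule sum_abs)
        also have "\<dots> \<le> (\<Sum>i\<in>UNIV. if i \<in> fst (snd y) then c * (1 + (loss i (snd x) (snd (snd y) i))\<^sup>2) else 0)"
        proof (intro sum_mono)
          fix i
          have d1: "\<bar>(fst x - l)$i\<bar> \<le> 1" using Lambda_diff[OF conjunct1[OF True] l] .
          have q: "\<bar>r\<bar> \<le> 1 + r\<^sup>2" for r :: real
          proof -
            have "0 \<le> (\<bar>r\<bar> - 1)\<^sup>2" by simp
            then show ?thesis by (simp add: power2_eq_square algebra_simps abs_mult_self_eq)
          qed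
          have "\<bar>c * (fst x - l)$i * loss i (snd x) (snd (snd y) i)\<bar> \<le> c * (1 * (1 + (loss i (snd x) (snd (snd y) i))\<^sup>2))"
            unfolding abs_mult using cpos d1 q by (intro mult_mono) auto
          then show "\<bar>if i \<in> fst (snd y) then c * (fst x - l)$i * loss i (snd x) (snd (snd y) i) else 0\<bar>
               \<le> (if i \<in> fst (snd y) then c * (1 + (loss i (snd x) (snd (snd y) i))\<^sup>2) else 0)"
            by simp
        qed
        also have "\<dots> = \<phi> y" using True2 by (simp add: \<phi>_def)
        finally show ?thesis .
      next
        case False
        then show ?thesis by (simp add: g1_def \<phi>_def)
      qed
      have "(\<integral>\<^sup>+y. ennreal \<bar>g1 t x y\<bar> \<partial>SL) \<le> ennreal (\<integral>y. \<phi> y \<partial>SL)"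
        by (rule nn_abs_le_integral[OF S1(1)]) (rule pw)
      also have "\<dots> \<le> ennreal (?N + sigma_lam\<^sup>2 + G_lam\<^sup>2)" using ile by (rule ennreal_leI)
      finally show ?thesis .
    next
      case False
      have z: "g1 t x y = 0" for y unfolding g1_def using False by auto
      show ?thesis by (simp add: z)
    qed
    have inner1: "(\<integral>y. g1 t x y \<partial>SL) = K1 x" if t: "t \<in> ?R" for t x
    proof (cases "fst x \<in> Lambda_set \<and> snd x \<in> W")
      case True
      have eqg: "g1 t x = (\<lambda>y. if fst y = t then (\<Sum>i\<in>UNIV. if i \<in> fst (snd y) then (\<lambda>i \<xi>. c * (fst x - l)$i * loss i (snd x) \<xi>) i (snd (snd y) i) else 0) else 0)"
        using True by (simp add: g1_def fun_eq_iff)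
      have "(\<integral>y. g1 t x y \<partial>SL) = (real m / ?N) * (\<Sum>i\<in>UNIV. \<integral>\<xi>. c * (fst x - l)$i * loss i (snd x) \<xi> \<partial>P i) / real \<tau>"
        unfolding eqg SL_def
        by (rule SL_sum_integral(2)[where h="\<lambda>i \<xi>. c * (fst x - l)$i * loss i (snd x) \<xi>", OF P \<tau> m int_c3[OF conjunct2[OF True]] t])
      also have "(\<Sum>i\<in>UNIV. \<integral>\<xi>. c * (fst x - l)$i * loss i (snd x) \<xi> \<partial>P i) = c * (\<Sum>i\<in>UNIV. (fst x - l)$i * (\<integral>\<xi>. loss i (snd x) \<xi> \<partial>P i))"
        by (simp add: sum_distrib_left mult.assoc)
      also have "(real m / ?N) * (c * (\<Sum>i\<in>UNIV. (fst x - l)$i * (\<integral>\<xi>. loss i (snd x) \<xi> \<partial>P i))) = (\<Sum>i\<in>UNIV. (fst x - l)$i * (\<integral>\<xi>. loss i (snd x) \<xi> \<partial>P i))"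
        unfolding mult.assoc[symmetric] cm by simp
      finally show ?thesis using True by (simp add: K1_def)
    next
      case False
      have z: "g1 t x y = 0" for y unfolding g1_def using False by auto
      have k: "K1 x = 0" unfolding K1_def using False by auto
      show ?thesis by (simp add: z k)
    qed
    have g2nn: "0 \<le> g2 t x y" for t x y
      unfolding g2_def using cpos by (auto intro!: sum_nonneg)
    have inner2: "integrable SL (g2 t x) \<and> (\<integral>y. g2 t x y \<partial>SL) \<le> (sigma_lam\<^sup>2 + G_lam\<^sup>2) / (real m * real \<tau>)" if t: "t \<in> ?R" for t x
    proof (cases "snd x \<in> W")
      case True
      have eqg: "g2 t x = (\<lambda>y. if fst y = t then (\<Sum>i\<in>UNIV. if i \<in> fst (snd y) then (\<lambda>i \<xi>. c\<^sup>2 * (loss i (snd x) \<xi>)\<^sup>2) i (snd (snd y) i) else 0) else 0)"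
        using True by (simp add: g2_def fun_eq_iff)
      have I: "integrable SL (g2 t x)"
        unfolding eqg SL_def
        by (rule SL_sum_integral(1)[where h="\<lambda>i \<xi>. c\<^sup>2 * (loss i (snd x) \<xi>)\<^sup>2", OF P \<tau> m int_c2[OF True] t])
      have "(\<integral>y. g2 t x y \<partial>SL) = (real m / ?N) * (\<Sum>i\<in>UNIV. \<integral>\<xi>. c\<^sup>2 * (loss i (snd x) \<xi>)\<^sup>2 \<partial>P i) / real \<tau>"
        unfolding eqg SL_def
        by (rule SL_sum_integral(2)[where h="\<lambda>i \<xi>. c\<^sup>2 * (loss i (snd x) \<xi>)\<^sup>2", OF P \<tau> m int_c2[OF True] t])
      also have "(\<Sum>i\<in>UNIV. \<integral>\<xi>. c\<^sup>2 * (loss i (snd x) \<xi>)\<^sup>2 \<partial>P i) = c * (c * (\<Sum>i\<in>UNIV. \<integral>\<xi>. (loss i (snd x) \<xi>)\<^sup>2 \<partial>P i))"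
        by (simp add: sum_distrib_left power2_eq_square mult.assoc)
      also have "(real m / ?N) * (c * (c * (\<Sum>i\<in>UNIV. \<integral>\<xi>. (loss i (snd x) \<xi>)\<^sup>2 \<partial>P i))) = c * (\<Sum>i\<in>UNIV. \<integral>\<xi>. (loss i (snd x) \<xi>)\<^sup>2 \<partial>P i)"
        unfolding mult.assoc[symmetric] cm by simp
      also have "c * (\<Sum>i\<in>UNIV. \<integral>\<xi>. (loss i (snd x) \<xi>)\<^sup>2 \<partial>P i) = (?N * (\<Sum>i\<in>UNIV. \<integral>\<xi>. (loss i (snd x) \<xi>)\<^sup>2 \<partial>P i)) / real m"
        by (simp add: c_def)
      finally have "(\<integral>y. g2 t x y \<partial>SL) = (?N * (\<Sum>i\<in>UNIV. \<integral>\<xi>. (loss i (snd x) \<xi>)\<^sup>2 \<partial>P i)) / real m / real \<tau>" .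
      also have "\<dots> \<le> (sigma_lam\<^sup>2 + G_lam\<^sup>2) / real m / real \<tau>"
        using L2b[OF True] mpos \<tau> by (intro divide_right_mono) auto
      finally show ?thesis using I by simp
    next
      case False
      have z: "g2 t x y = 0" for y unfolding g2_def using False by auto
      have "g2 t x = (\<lambda>y. 0)" using z by auto
      then show ?thesis using mpos \<tau> by simp
    qed
    have bnd2: "(\<integral>\<^sup>+y. ennreal \<bar>g2 t x y\<bar> \<partial>SL) \<le> ennreal ((sigma_lam\<^sup>2 + G_lam\<^sup>2) / (real m * real \<tau>))" if t: "t \<in> ?R" for t x
    proof -
      have "(\<integral>\<^sup>+y. ennreal \<bar>g2 t x y\<bar> \<partial>SL) \<le> ennreal (\<integral>y. g2 t x y \<partial>SL)"
        by (rule nn_abs_le_integral) (use inner2[OF t, of x] g2nn in auto)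
      also have "\<dots> \<le> ennreal ((sigma_lam\<^sup>2 + G_lam\<^sup>2) / (real m * real \<tau>))"
        using inner2[OF t, of x] by (intro ennreal_leI) auto
      finally show ?thesis .
    qed
    have F1: "integrable M (\<lambda>\<omega>. g1 t (X t \<omega>) (Y \<omega>)) \<and>
        (\<integral>\<omega>. g1 t (X t \<omega>) (Y \<omega>) \<partial>M) = (\<integral>x. (\<integral>y. g1 t x y \<partial>SL) \<partial>distr M (borel \<Otimes>\<^sub>M borel) (X t))"
      if t: "t \<in> ?R" for t
    proof -
      have b: "(\<integral>\<^sup>+y. ennreal \<bar>g1 t (fst (x,y)) (snd (x,y))\<bar> \<partial>SL) \<le> ennreal (?N + sigma_lam\<^sup>2 + G_lam\<^sup>2)" for x
        using bnd1[OF t, of x] by (simp only: fst_conv snd_conv)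
      show ?thesis
        using indep_fubini[where g="\<lambda>z. g1 t (fst z) (snd z)", OF M Xm[of t] Ym Ylaw indep[OF t] g1m[of t] b]
        by (simp only: fst_conv snd_conv)
    qed
    have F2: "integrable M (\<lambda>\<omega>. g2 t (X t \<omega>) (Y \<omega>)) \<and>
        (\<integral>\<omega>. g2 t (X t \<omega>) (Y \<omega>) \<partial>M) = (\<integral>x. (\<integral>y. g2 t x y \<partial>SL) \<partial>distr M (borel \<Otimes>\<^sub>M borel) (X t))"
      if t: "t \<in> ?R" for t
    proof -
      have b: "(\<integral>\<^sup>+y. ennreal \<bar>g2 t (fst (x,y)) (snd (x,y))\<bar> \<partial>SL) \<le> ennreal ((sigma_lam\<^sup>2 + G_lam\<^sup>2) / (real m * real \<tau>))" for x
        using bnd2[OF t, of x] by (simp only: fst_conv snd_conv)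
      show ?thesis
        using indep_fubini[where g="\<lambda>z. g2 t (fst z) (snd z)", OF M Xm[of t] Ym Ylaw indep[OF t] g2m[of t] b]
        by (simp only: fst_conv snd_conv)
    qed
    have E1: "(\<integral>\<omega>. g1 t (X t \<omega>) (Y \<omega>) \<partial>M) = (\<integral>\<omega>. Fobj f (w t \<omega>) (lam s \<omega>) - Fobj f (w t \<omega>) l \<partial>M) / real \<tau>"
      if t: "t \<in> ?R" for t
    proof -
      have "(\<integral>\<omega>. g1 t (X t \<omega>) (Y \<omega>) \<partial>M) = (\<integral>x. (\<integral>y. g1 t x y \<partial>SL) \<partial>distr M (borel \<Otimes>\<^sub>M borel) (X t))"
        using F1[OF t] by blast
      also have "\<dots> = (\<integral>x. K1 x \<partial>distr M (borel \<Otimes>\<^sub>M borel) (X t))"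
        using inner1[OF t] by simp
      also have "\<dots> = (\<integral>\<omega>. K1 (X t \<omega>) \<partial>M)"
        by (rule integral_distr[OF Xm K1m])
      also have "\<dots> = (\<integral>\<omega>. (Fobj f (w t \<omega>) (lam s \<omega>) - Fobj f (w t \<omega>) l) / real \<tau> \<partial>M)"
      proof (rule Bochner_Integration.integral_cong[OF refl])
        fix \<omega> assume \<omega>: "\<omega> \<in> space M"
        have "K1 (X t \<omega>) = (\<Sum>i\<in>UNIV. (lam s \<omega> - l)$i * f i (w t \<omega>)) / real \<tau>"
          using lamL[OF sS'(1) \<omega>] w_in[OF \<omega>] by (simp add: K1_def X_def f_def)
        also have "(\<Sum>i\<in>UNIV. (lam s \<omega> - l)$i * f i (w t \<omega>)) = Fobj f (w t \<omega>) (lam s \<omega>) - Fobj f (w t \<omega>) l"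
          by (simp add: Fobj_def sum_subtractf left_diff_distrib)
        finally show "K1 (X t \<omega>) = (Fobj f (w t \<omega>) (lam s \<omega>) - Fobj f (w t \<omega>) l) / real \<tau>" .
      qed
      also have "\<dots> = (\<integral>\<omega>. Fobj f (w t \<omega>) (lam s \<omega>) - Fobj f (w t \<omega>) l \<partial>M) / real \<tau>"
        by simp
      finally show ?thesis .
    qed
    have E2: "(\<integral>\<omega>. g2 t (X t \<omega>) (Y \<omega>) \<partial>M) \<le> (sigma_lam\<^sup>2 + G_lam\<^sup>2) / (real m * real \<tau>)"
      if t: "t \<in> ?R" for t
    proof -
      have "(\<integral>\<omega>. g2 t (X t \<omega>) (Y \<omega>) \<partial>M) = (\<integral>x. (\<integral>y. g2 t x y \<partial>SL) \<partial>distr M (borel \<Otimes>\<^sub>M borel) (X t))"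
        using F2[OF t] by blast
      also have "\<dots> \<le> (sigma_lam\<^sup>2 + G_lam\<^sup>2) / (real m * real \<tau>)"
        by (rule integral_le_const_prob[OF prob_space_distr[OF Xm]]) (use inner2[OF t] mpos \<tau> in auto)
      finally show ?thesis .
    qed
    have AEt: "AE \<omega> in M. tp s \<omega> \<in> ?R"
    proof -
      interpret P2: prob_space "measure_pmf (pmf_of_set {A::'n set. card A = m}) \<Otimes>\<^sub>M PiM UNIV P"
        by (intro prob_space_pair prob_space_measure_pmf prob_space_PiM P)
      interpret PP: pair_sigma_finite "measure_pmf (pmf_of_set ?R)" "measure_pmf (pmf_of_set {A::'n set. card A = m}) \<Otimes>\<^sub>M PiM UNIV P" ..
      have Rne: "?R \<noteq> {}" using \<tau> by auto
      have SLsets: "{y \<in> space SL. fst y \<in> ?R} \<in> sets SL"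
      proof -
        have "fst -` ?R \<inter> space SL \<in> sets SL"
          unfolding SL_def sample_law_def by (rule measurable_sets[OF measurable_fst]) simp
        moreover have "{y \<in> space SL. fst y \<in> ?R} = fst -` ?R \<inter> space SL" by auto
        ultimately show ?thesis by simp
      qed
      have "AE y in SL. fst y \<in> ?R"
        unfolding SL_def sample_law_def
      proof (rule PP.AE_pair_measure)
        show "{x \<in> space (measure_pmf (pmf_of_set ?R) \<Otimes>\<^sub>M (measure_pmf (pmf_of_set {A::'n set. card A = m}) \<Otimes>\<^sub>M PiM UNIV P)). fst x \<in> ?R}
          \<in> sets (measure_pmf (pmf_of_set ?R) \<Otimes>\<^sub>M (measure_pmf (pmf_of_set {A::'n set. card A = m}) \<Otimes>\<^sub>M PiM UNIV P))"
          using SLsets unfolding SL_def sample_law_def .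
        show "AE x in measure_pmf (pmf_of_set ?R). AE y in measure_pmf (pmf_of_set {A::'n set. card A = m}) \<Otimes>\<^sub>M PiM UNIV P. fst (x, y) \<in> ?R"
          using AE_measure_pmf[of "pmf_of_set ?R"] Rne by (auto elim!: eventually_mono)
      qed
      then have "AE y in distr M SL Y. fst y \<in> ?R" by (simp only: Ylaw)
      then have "AE \<omega> in M. fst (Y \<omega>) \<in> ?R"
      proof -
        show ?thesis using \<open>AE y in distr M SL Y. fst y \<in> ?R\<close> by (subst (asm) AE_distr_iff[OF Ym SLsets])
      qed
      then show ?thesis by (simp add: Y_def dual_sample_def)
    qed
    define V where "V \<omega> = dual_vec m loss (U s \<omega>) (w (tp s \<omega>) \<omega>) (\<lambda>i. \<zeta> s i \<omega>)" for \<omega>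
    have V1: "inner (V \<omega>) (lam s \<omega> - l) = (\<Sum>t\<in>?R. g1 t (X t \<omega>) (Y \<omega>))"
      and V2: "(norm (V \<omega>))\<^sup>2 = (\<Sum>t\<in>?R. g2 t (X t \<omega>) (Y \<omega>))"
      if \<omega>: "\<omega> \<in> space M" and tR: "tp s \<omega> \<in> ?R" for \<omega>
    proof -
      define Z1 where "Z1 t = (\<Sum>i\<in>UNIV. if i \<in> U s \<omega> then c * (lam s \<omega> - l)$i * loss i (w t \<omega>) (\<zeta> s i \<omega>) else 0)" for t
      define Z2 where "Z2 t = (\<Sum>i\<in>UNIV. if i \<in> U s \<omega> then c\<^sup>2 * (loss i (w t \<omega>) (\<zeta> s i \<omega>))\<^sup>2 else 0)" for t
      have gx1: "g1 t (X t \<omega>) (Y \<omega>) = (if tp s \<omega> = t then Z1 t else 0)" for t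
        using lamL[OF sS'(1) \<omega>] w_in[OF \<omega>]
        by (simp add: g1_def X_def Y_def dual_sample_def Z1_def cong: if_cong)
      have gx2: "g2 t (X t \<omega>) (Y \<omega>) = (if tp s \<omega> = t then Z2 t else 0)" for t
        using w_in[OF \<omega>]
        by (simp add: g2_def X_def Y_def dual_sample_def Z2_def cong: if_cong)
      have s1: "(\<Sum>t\<in>?R. g1 t (X t \<omega>) (Y \<omega>)) = Z1 (tp s \<omega>)"
        using tR by (simp only: gx1 sum.delta' finite_atLeastAtMost if_True)
      have s2: "(\<Sum>t\<in>?R. g2 t (X t \<omega>) (Y \<omega>)) = Z2 (tp s \<omega>)"
        using tR by (simp only: gx2 sum.delta' finite_atLeastAtMost if_True)
      have "inner (V \<omega>) (lam s \<omega> - l) = Z1 (tp s \<omega>)"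
        unfolding V_def Z1_def inner_vec_def dual_vec_def c_def
        by (intro sum.cong refl) auto
      then show "inner (V \<omega>) (lam s \<omega> - l) = (\<Sum>t\<in>?R. g1 t (X t \<omega>) (Y \<omega>))" using s1 by simp
      have "(norm (V \<omega>))\<^sup>2 = Z2 (tp s \<omega>)"
        unfolding norm_sq_vec V_def Z2_def dual_vec_def c_def
        by (intro sum.cong refl) (auto simp: power_mult_distrib power_divide)
      then show "(norm (V \<omega>))\<^sup>2 = (\<Sum>t\<in>?R. g2 t (X t \<omega>) (Y \<omega>))" using s2 by simp
    qed
    let ?a = "real \<tau> * \<gamma>"
    have PW: "AE \<omega> in M. (norm (lam (Suc s) \<omega> - l))\<^sup>2 \<le> (norm (lam s \<omega> - l))\<^sup>2
        + 2 * ?a * (\<Sum>t\<in>?R. g1 t (X t \<omega>) (Y \<omega>)) + ?a\<^sup>2 * (\<Sum>t\<in>?R. g2 t (X t \<omega>) (Y \<omega>))"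
      using AEt
    proof (rule AE_mp, intro AE_I2 impI)
      fix \<omega> assume \<omega>: "\<omega> \<in> space M" and tR: "tp s \<omega> \<in> ?R"
      have "(norm (lam (Suc s) \<omega> - l))\<^sup>2 = (norm (closest_point Lambda_set (lam s \<omega> + ?a *\<^sub>R V \<omega>) - l))\<^sup>2"
        using lam_step[OF sS \<omega>] by (simp add: V_def)
      also have "\<dots> \<le> (norm (lam s \<omega> + ?a *\<^sub>R V \<omega> - l))\<^sup>2" by (rule proj_ineq[OF l])
      also have "\<dots> = (norm (lam s \<omega> - l))\<^sup>2 + 2 * ?a * inner (V \<omega>) (lam s \<omega> - l) + ?a\<^sup>2 * (norm (V \<omega>))\<^sup>2"
        by (rule expand_sq)
      finally show "(norm (lam (Suc s) \<omega> - l))\<^sup>2 \<le> (norm (lam s \<omega> - l))\<^sup>2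
        + 2 * ?a * (\<Sum>t\<in>?R. g1 t (X t \<omega>) (Y \<omega>)) + ?a\<^sup>2 * (\<Sum>t\<in>?R. g2 t (X t \<omega>) (Y \<omega>))"
        using V1[OF \<omega> tR] V2[OF \<omega> tR] by simp
    qed
    have I1: "integrable M (\<lambda>\<omega>. g1 t (X t \<omega>) (Y \<omega>))" if "t \<in> ?R" for t using F1[OF that] by blast
    have I2: "integrable M (\<lambda>\<omega>. g2 t (X t \<omega>) (Y \<omega>))" if "t \<in> ?R" for t using F2[OF that] by blast
    have IS1: "integrable M (\<lambda>\<omega>. \<Sum>t\<in>?R. g1 t (X t \<omega>) (Y \<omega>))" by (intro Bochner_Integration.integrable_sum I1)
    have IS2: "integrable M (\<lambda>\<omega>. \<Sum>t\<in>?R. g2 t (X t \<omega>) (Y \<omega>))" by (intro Bochner_Integration.integrable_sum I2)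
    have "a (Suc s) \<le> (\<integral>\<omega>. (norm (lam s \<omega> - l))\<^sup>2
        + 2 * ?a * (\<Sum>t\<in>?R. g1 t (X t \<omega>) (Y \<omega>)) + ?a\<^sup>2 * (\<Sum>t\<in>?R. g2 t (X t \<omega>) (Y \<omega>)) \<partial>M)"
      unfolding a_def
      by (rule integral_mono_AE[OF aInt[OF sS'(2)] _ PW]) (intro Bochner_Integration.integrable_add Bochner_Integration.integrable_mult_right aInt[OF sS'(1)] IS1 IS2)
    also have "\<dots> = a s + 2 * ?a * (\<Sum>t\<in>?R. \<integral>\<omega>. g1 t (X t \<omega>) (Y \<omega>) \<partial>M) + ?a\<^sup>2 * (\<Sum>t\<in>?R. \<integral>\<omega>. g2 t (X t \<omega>) (Y \<omega>) \<partial>M)"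
    proof -
      have "(\<integral>\<omega>. (norm (lam s \<omega> - l))\<^sup>2
        + 2 * ?a * (\<Sum>t\<in>?R. g1 t (X t \<omega>) (Y \<omega>)) + ?a\<^sup>2 * (\<Sum>t\<in>?R. g2 t (X t \<omega>) (Y \<omega>)) \<partial>M)
        = (\<integral>\<omega>. (norm (lam s \<omega> - l))\<^sup>2 + 2 * ?a * (\<Sum>t\<in>?R. g1 t (X t \<omega>) (Y \<omega>)) \<partial>M) + (\<integral>\<omega>. ?a\<^sup>2 * (\<Sum>t\<in>?R. g2 t (X t \<omega>) (Y \<omega>)) \<partial>M)"
        by (intro Bochner_Integration.integral_add Bochner_Integration.integrable_add Bochner_Integration.integrable_mult_right aInt[OF sS'(1)] IS1 IS2)
      also have "(\<integral>\<omega>. (norm (lam s \<omega> - l))\<^sup>2 + 2 * ?a * (\<Sum>t\<in>?R. g1 t (X t \<omega>) (Y \<omega>)) \<partial>M)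
          = a s + (\<integral>\<omega>. 2 * ?a * (\<Sum>t\<in>?R. g1 t (X t \<omega>) (Y \<omega>)) \<partial>M)"
        unfolding a_def by (intro Bochner_Integration.integral_add Bochner_Integration.integrable_mult_right aInt[OF sS'(1)] IS1)
      also have "(\<integral>\<omega>. 2 * ?a * (\<Sum>t\<in>?R. g1 t (X t \<omega>) (Y \<omega>)) \<partial>M) = 2 * ?a * (\<Sum>t\<in>?R. \<integral>\<omega>. g1 t (X t \<omega>) (Y \<omega>) \<partial>M)"
        by (simp add: Bochner_Integration.integral_sum I1)
      also have "(\<integral>\<omega>. ?a\<^sup>2 * (\<Sum>t\<in>?R. g2 t (X t \<omega>) (Y \<omega>)) \<partial>M) = ?a\<^sup>2 * (\<Sum>t\<in>?R. \<integral>\<omega>. g2 t (X t \<omega>) (Y \<omega>) \<partial>M)"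
        by (simp add: Bochner_Integration.integral_sum I2)
      finally show ?thesis by simp
    qed
    finally have step: "a (Suc s) \<le> a s + 2 * ?a * (\<Sum>t\<in>?R. \<integral>\<omega>. g1 t (X t \<omega>) (Y \<omega>) \<partial>M) + ?a\<^sup>2 * (\<Sum>t\<in>?R. \<integral>\<omega>. g2 t (X t \<omega>) (Y \<omega>) \<partial>M)" .
    have sum1: "(\<Sum>t\<in>?R. \<integral>\<omega>. g1 t (X t \<omega>) (Y \<omega>) \<partial>M) = - Q s / real \<tau>"
    proof -
      have "(\<Sum>t\<in>?R. \<integral>\<omega>. g1 t (X t \<omega>) (Y \<omega>) \<partial>M) = (\<Sum>t\<in>?R. - (\<integral>\<omega>. Fobj f (w t \<omega>) l - Fobj f (w t \<omega>) (lam s \<omega>) \<partial>M) / real \<tau>)"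
      proof (intro sum.cong refl)
        fix t assume t: "t \<in> ?R"
        have "(\<integral>\<omega>. Fobj f (w t \<omega>) (lam s \<omega>) - Fobj f (w t \<omega>) l \<partial>M) = (\<integral>\<omega>. - (Fobj f (w t \<omega>) l - Fobj f (w t \<omega>) (lam s \<omega>)) \<partial>M)"
          by simp
        also have "\<dots> = - (\<integral>\<omega>. Fobj f (w t \<omega>) l - Fobj f (w t \<omega>) (lam s \<omega>) \<partial>M)"
          by (rule Bochner_Integration.integral_minus)
        finally show "(\<integral>\<omega>. g1 t (X t \<omega>) (Y \<omega>) \<partial>M) = - (\<integral>\<omega>. Fobj f (w t \<omega>) l - Fobj f (w t \<omega>) (lam s \<omega>) \<partial>M) / real \<tau>"
          using E1[OF t] by simp
      qed
      also have "\<dots> = - Q s / real \<tau>"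
        unfolding Q_def by (simp add: sum_divide_distrib sum_negf)
      finally show ?thesis .
    qed
    have sum2: "(\<Sum>t\<in>?R. \<integral>\<omega>. g2 t (X t \<omega>) (Y \<omega>) \<partial>M) \<le> (sigma_lam\<^sup>2 + G_lam\<^sup>2) / real m"
    proof -
      have "(\<Sum>t\<in>?R. \<integral>\<omega>. g2 t (X t \<omega>) (Y \<omega>) \<partial>M) \<le> (\<Sum>t\<in>?R. (sigma_lam\<^sup>2 + G_lam\<^sup>2) / (real m * real \<tau>))"
        by (intro sum_mono E2)
      also have "\<dots> = (sigma_lam\<^sup>2 + G_lam\<^sup>2) / real m"
        using \<tau> by simp
      finally show ?thesis .
    qed
    have a2: "0 \<le> ?a\<^sup>2" by simp
    have "a (Suc s) \<le> a s + 2 * ?a * (- Q s / real \<tau>) + ?a\<^sup>2 * ((sigma_lam\<^sup>2 + G_lam\<^sup>2) / real m)"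
      using step sum1 mult_left_mono[OF sum2 a2] by simp
    also have "2 * ?a * (- Q s / real \<tau>) = - 2 * \<gamma> * Q s" using \<tau> by simp
    finally have "2 * \<gamma> * Q s \<le> a s - a (Suc s) + ?a\<^sup>2 * ((sigma_lam\<^sup>2 + G_lam\<^sup>2) / real m)" by simp
    then have "Q s \<le> (a s - a (Suc s) + ?a\<^sup>2 * ((sigma_lam\<^sup>2 + G_lam\<^sup>2) / real m)) / (2 * \<gamma>)"
      using \<gamma> by (simp add: field_simps)
    also have "\<dots> = (a s - a (Suc s)) / (2 * \<gamma>) + (real \<tau>)\<^sup>2 * \<gamma> * (sigma_lam\<^sup>2 + G_lam\<^sup>2) / (2 * real m)"
      using \<gamma> mpos by (simp add: field_simps power2_eq_square)
    finally show ?thesis .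
  qed
  have a0: "a 0 \<le> D_Lam\<^sup>2"
    unfolding a_def by (rule integral_le_const_prob[OF M]) (use aBnd in auto)
  have aS: "0 \<le> a S" unfolding a_def by simp
  have sumQ: "(\<Sum>s<S. Q s) \<le> (a 0 - a S) / (2 * \<gamma>) + real S * ((real \<tau>)\<^sup>2 * \<gamma> * (sigma_lam\<^sup>2 + G_lam\<^sup>2) / (2 * real m))"
  proof -
    have "(\<Sum>s<S. Q s) \<le> (\<Sum>s<S. (a s - a (Suc s)) / (2 * \<gamma>) + (real \<tau>)\<^sup>2 * \<gamma> * (sigma_lam\<^sup>2 + G_lam\<^sup>2) / (2 * real m))"
      by (intro sum_mono round) auto
    also have "\<dots> = (\<Sum>s<S. (a s - a (Suc s))) / (2 * \<gamma>) + real S * ((real \<tau>)\<^sup>2 * \<gamma> * (sigma_lam\<^sup>2 + G_lam\<^sup>2) / (2 * real m))"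
      by (simp add: sum.distrib sum_divide_distrib)
    also have "(\<Sum>s<S. (a s - a (Suc s))) = a 0 - a S" by (rule sum_lessThan_telescope')
    finally show ?thesis .
  qed
  show ?thesis
  proof (cases "S = 0")
    case True
    have "0 \<le> \<gamma> * real \<tau> * G_lam\<^sup>2 / 2" "0 \<le> \<gamma> * real \<tau> * sigma_lam\<^sup>2 / (2 * real m)"
      using \<gamma> by auto
    then show ?thesis using True T by simp
  next
    case False
    then have Tpos: "real T > 0" using T \<tau> by simp
    have "(1 / real T) * (\<Sum>s<S. Q s) \<le> (1 / real T) * (D_Lam\<^sup>2 / (2 * \<gamma>) + real S * ((real \<tau>)\<^sup>2 * \<gamma> * (sigma_lam\<^sup>2 + G_lam\<^sup>2) / (2 * real m)))"
    proof (intro mult_left_mono)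
      have "(a 0 - a S) / (2 * \<gamma>) \<le> D_Lam\<^sup>2 / (2 * \<gamma>)" using a0 aS \<gamma> by (intro divide_right_mono) auto
      then show "(\<Sum>s<S. Q s) \<le> D_Lam\<^sup>2 / (2 * \<gamma>) + real S * ((real \<tau>)\<^sup>2 * \<gamma> * (sigma_lam\<^sup>2 + G_lam\<^sup>2) / (2 * real m))"
        using sumQ by linarith
    qed (use Tpos in simp)
    also have "\<dots> = D_Lam\<^sup>2 / (2 * \<gamma> * real T) + \<gamma> * real \<tau> * (sigma_lam\<^sup>2 + G_lam\<^sup>2) / (2 * real m)"
    proof -
      define X where "X = (real \<tau>)\<^sup>2 * \<gamma> * (sigma_lam\<^sup>2 + G_lam\<^sup>2) / (2 * real m)"
      have Sp: "real S > 0" using False by simp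
      have tp: "real \<tau> > 0" using \<tau> by simp
      have "(1 / real T) * (D_Lam\<^sup>2 / (2 * \<gamma>) + real S * X) = D_Lam\<^sup>2 / (2 * \<gamma> * real T) + X / real \<tau>"
        using Sp tp \<gamma> unfolding T by (simp add: field_simps)
      moreover have "X / real \<tau> = \<gamma> * real \<tau> * (sigma_lam\<^sup>2 + G_lam\<^sup>2) / (2 * real m)"
        using tp unfolding X_def by (simp add: power2_eq_square)
      ultimately show ?thesis unfolding X_def by simp
    qed
    also have "\<dots> \<le> D_Lam\<^sup>2 / (2 * \<gamma> * real T) + \<gamma> * real \<tau> * G_lam\<^sup>2 / 2 + \<gamma> * real \<tau> * sigma_lam\<^sup>2 / (2 * real m)"
    proof -
      have m1: "1 \<le> real m" using m by simp
      have "G_lam\<^sup>2 * 1 \<le> G_lam\<^sup>2 * real m" by (rule mult_left_mono[OF m1]) simp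
      then have "G_lam\<^sup>2 / real m \<le> G_lam\<^sup>2" using mpos by (simp add: divide_le_eq)
      then have "\<gamma> * real \<tau> * G_lam\<^sup>2 / (2 * real m) \<le> \<gamma> * real \<tau> * G_lam\<^sup>2 / 2"
        using \<gamma> \<tau> mpos by (simp add: field_simps mult_left_mono)
      then show ?thesis by (simp add: add_divide_distrib distrib_left)
    qed
    finally show ?thesis unfolding Q_def .
  qed
qed

end
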